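(* Under assumptions (i) and (ii) of the context, fix $l\in[L]$ and let $\mathbf H^{(l-1)}$ be any output of the first $l-1$ GIN layers (with weights satisfying (ii)) on input $\mathbf G$ (for $l=1$, $\mathbf H^{(0)}=\mathbf X$). Then for every $\epsilon>0$, the set $\mathcal S_l=\{\mathbf H^{(l)}\text{ computed from }\mathbf H^{(l-1)}\text{ by layer }l\text{ with weights satisfying (ii)}\}$ satisfies $$\ln\mathcal N(\epsilon,\mathcal S_l,\|\cdot\|_2)\le\frac{c^{2l}\tau_l^2\big(\prod_{i=1}^l\kappa_i\big)^2}{\epsilon^2}\|\mathbf X\|_2^2\ln(2\bar d^2),$$ where $\kappa_i=\prod_{j=1}^r\kappa_j^{(i)}$, $\tau_l=\big(\sum_{i=1}^r(b_i^{(l)}/\kappa_i^{(l)})^{2/3}\big)^{3/2}$, $c=\|\tilde{\mathbf A}\|_\sigma$, $\bar d=\max_{i,l}d_i^{(l)}$.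
   Context: Data: $N$ graphs $G_i=(\mathbf A_i,\mathbf X_i)$, $\mathbf A_i\in\{0,1\}^{n_i\times n_i}$ symmetric adjacency, $\mathbf X_i\in\mathbb R^{n_i\times d_0}$; $\mathbf X=[\mathbf X_1^\top,\dots,\mathbf X_N^\top]^\top$, $\mathbf A=\mathrm{diag}(\mathbf A_1,\dots,\mathbf A_N)$, $\tilde{\mathbf A}=\mathbf A+\mathbf I$, $\mathbf G=(\tilde{\mathbf A},\mathbf X)$. $\|\cdot\|_2$ Frobenius norm, $\|\cdot\|_\sigma$ spectral norm, $\|\mathbf M\|_{2,1}=\sum_j\|\mathbf M_{:,j}\|_2$. GIN layer $l$: with weights $\mathbf W_i^{(l)}\in\mathbb R^{d_{i-1}^{(l)}\times d_i^{(l)}}$ ($d_0^{(1)}=d_0$, $d_0^{(l)}=d_r^{(l-1)}$) and entrywise activation $\sigma$, $\mathbf H^{(l)}=\sigma(\cdots\sigma(\sigma(\tilde{\mathbf A}\mathbf H^{(l-1)}\mathbf W_1^{(l)})\mathbf W_2^{(l)})\cdots\mathbf W_{r-1}^{(l)})\mathbf W_r^{(l)}$, $\mathbf H^{(0)}=\mathbf X$. Assumptions: (i) $\sigma$ 1-Lipschitz with $\sigma(0)=0$; (ii) $\|\mathbf W_i^{(l)}\|_\sigma\le\kappa_i^{(l)}$, $\|\mathbf W_i^{(l)}\|_{2,1}\le b_i^{(l)}$. $\mathcal N(\epsilon,\mathcal S,\|\cdot\|_2)$ denotes the minimal cardinality of a set $V$ of matrices such that every element of $\mathcal S$ lies within Frobenius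 distance $\epsilon$ of some element of $V$. *)

theory Defs
  imports Complex_Main "HOL-Library.Extended_Nat"
begin

text \<open>Matrices are represented as functions nat => nat => real together with
explicit dimensions; only entries with row index < m and column index < k matter.\<close>

type_synonym mat = "nat \<Rightarrow> nat \<Rightarrow> real"

definition mmul :: "nat \<Rightarrow> mat \<Rightarrow> mat \<Rightarrow> mat" where
  "mmul k M P = (\<lambda>p q. \<Sum>t<k. M p t * P t q)"

definition msub :: "mat \<Rightarrow> mat \<Rightarrow> mat" where
  "msub M P = (\<lambda>p q. M p q - P p q)"

definition frob :: "nat \<Rightarrow> nat \<Rightarrow> mat \<Rightarrow> real" where
  "frob m k M = sqrt (\<Sum>p<m. \<Sum>q<k. (M p q)\<^sup>2)"

definition norm21 :: "nat \<Rightarrow> nat \<Rightarrow> mat \<Rightarrow> real" where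
  "norm21 m k M = (\<Sum>q<k. sqrt (\<Sum>p<m. (M p q)\<^sup>2))"

definition specn :: "nat \<Rightarrow> nat \<Rightarrow> mat \<Rightarrow> real" where
  "specn m k M = Sup {sqrt (\<Sum>p<m. (\<Sum>q<k. M p q * v q)\<^sup>2) | v.
                        (\<Sum>q<k. (v q)\<^sup>2) \<le> 1}"

text \<open>Covering number N(eps, S, Frobenius norm) for a set S of m x k matrices
(infinity if no finite cover exists).\<close>
definition covering_number :: "real \<Rightarrow> mat set \<Rightarrow> nat \<Rightarrow> nat \<Rightarrow> enat" where
  "covering_number \<epsilon> S m k =
     (INF V \<in> {V. finite V \<and> (\<forall>M\<in>S. \<exists>U\<in>V. frob m k (msub M U) \<le> \<epsilon>)}. enat (card V))"

text \<open>Block-diagonal assembly of N graphs: n i is the number of nodes of graph i.\<close>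
definition offs :: "(nat \<Rightarrow> nat) \<Rightarrow> nat \<Rightarrow> nat" where
  "offs n i = (\<Sum>j<i. n j)"

definition blockdiag :: "nat \<Rightarrow> (nat \<Rightarrow> nat) \<Rightarrow> (nat \<Rightarrow> mat) \<Rightarrow> mat" where
  "blockdiag N n Ag = (\<lambda>p q. \<Sum>i<N.
      if offs n i \<le> p \<and> p < offs n i + n i \<and> offs n i \<le> q \<and> q < offs n i + n i
      then Ag i (p - offs n i) (q - offs n i) else 0)"

definition vstack :: "nat \<Rightarrow> (nat \<Rightarrow> nat) \<Rightarrow> (nat \<Rightarrow> mat) \<Rightarrow> mat" where
  "vstack N n Xg = (\<lambda>p j. \<Sum>i<N.
      if offs n i \<le> p \<and> p < offs n i + n i then Xg i (p - offs n i) j else 0)"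

definition addI :: "mat \<Rightarrow> mat" where
  "addI A = (\<lambda>p q. A p q + (if p = q then 1 else 0))"

text \<open>One GIN layer with r weight matrices W 1 .. W r, W i of size d(i-1) x d i,
applied to H (n x d 0):  sigma(...sigma(sigma(At H W1) W2)...W(r-1)) Wr.
gin_stage j is the pre-activation after j weight multiplications (gin_stage 0 = At H).\<close>
fun gin_stage :: "(real \<Rightarrow> real) \<Rightarrow> mat \<Rightarrow> nat \<Rightarrow> (nat \<Rightarrow> nat) \<Rightarrow> (nat \<Rightarrow> mat) \<Rightarrow> mat \<Rightarrow> nat \<Rightarrow> mat" where
  "gin_stage \<sigma> At n d W H 0 = mmul n At H"
| "gin_stage \<sigma> At n d W H (Suc j) =
     mmul (d j) (if j = 0 then gin_stage \<sigma> At n d W H 0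
                 else (\<lambda>p q. \<sigma> (gin_stage \<sigma> At n d W H j p q))) (W (Suc j))"

definition gin_layer :: "(real \<Rightarrow> real) \<Rightarrow> mat \<Rightarrow> nat \<Rightarrow> nat \<Rightarrow> (nat \<Rightarrow> nat) \<Rightarrow> (nat \<Rightarrow> mat) \<Rightarrow> mat \<Rightarrow> mat" where
  "gin_layer \<sigma> At n r d W H = gin_stage \<sigma> At n d W H r"

text \<open>Output of the first l layers; d l i and W l i are the dimensions / weights of layer l.\<close>
fun gin_net :: "(real \<Rightarrow> real) \<Rightarrow> mat \<Rightarrow> nat \<Rightarrow> nat \<Rightarrow> (nat \<Rightarrow> nat \<Rightarrow> nat) \<Rightarrow> (nat \<Rightarrow> nat \<Rightarrow> mat) \<Rightarrow> mat \<Rightarrow> nat \<Rightarrow> mat" where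
  "gin_net \<sigma> At n r d W X 0 = X"
| "gin_net \<sigma> At n r d W X (Suc l) = gin_layer \<sigma> At n r (d (Suc l)) (W (Suc l)) (gin_net \<sigma> At n r d W X l)"

definition weights_ok :: "nat \<Rightarrow> (nat \<Rightarrow> nat) \<Rightarrow> (nat \<Rightarrow> real) \<Rightarrow> (nat \<Rightarrow> real) \<Rightarrow> (nat \<Rightarrow> mat) \<Rightarrow> bool" where
  "weights_ok r d \<kappa> b W \<longleftrightarrow> (\<forall>i\<in>{1..r}.
      specn (d (i - 1)) (d i) (W i) \<le> \<kappa> i \<and> norm21 (d (i - 1)) (d i) (W i) \<le> b i)"

end

theory Submission
  imports Defs "HOL-Analysis.L2_Norm"
begin


lemma frob_L2: "frob n m M = L2_set (\<lambda>(p,q). M p q) ({..<n} \<times> {..<m})"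
  unfolding frob_def L2_set_def by (simp add: sum.cartesian_product case_prod_beta)

lemma frob_nonneg: "0 \<le> frob n m M"
  unfolding frob_def by (simp add: sum_nonneg)

lemma frob_sq: "(frob n m M)\<^sup>2 = (\<Sum>p<n. \<Sum>q<m. (M p q)\<^sup>2)"
  unfolding frob_def by (simp add: sum_nonneg)

lemma frob_add: "frob n m (\<lambda>p q. M p q + P p q) \<le> frob n m M + frob n m P"
proof -
  have e: "(\<lambda>(p,q). M p q + P p q) = (\<lambda>i. (\<lambda>(p,q). M p q) i + (\<lambda>(p,q). P p q) i)" by auto
  show ?thesis unfolding frob_L2 e by (rule L2_set_triangle_ineq)
qed

lemma frob_tri: "frob n m (msub M P) \<le> frob n m (msub M Q) + frob n m (msub Q P)"
proof -
  have "msub M P = (\<lambda>p q. msub M Q p q + msub Q P p q)" by (auto simp: msub_def)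
  then show ?thesis using frob_add[of n m "msub M Q" "msub Q P"] by simp
qed

lemma frob_scale: "frob n m (\<lambda>p q. c * M p q) = \<bar>c\<bar> * frob n m M"
proof -
  have "(\<Sum>p<n. \<Sum>q<m. (c * M p q)\<^sup>2) = c\<^sup>2 * (\<Sum>p<n. \<Sum>q<m. (M p q)\<^sup>2)"
    by (simp add: power_mult_distrib sum_distrib_left)
  then show ?thesis unfolding frob_def by (simp add: real_sqrt_mult)
qed

lemma frob_cong: "(\<And>p q. p < n \<Longrightarrow> q < m \<Longrightarrow> M p q = P p q) \<Longrightarrow> frob n m M = frob n m P"
  unfolding frob_def by simp

lemma frob_zero: "frob n m (\<lambda>p q. 0) = 0"
  unfolding frob_def by simp

lemma frob_sigma_diff:
  assumes "\<forall>x y. \<bar>\<sigma> x - \<sigma> y\<bar> \<le> \<bar>x - y\<bar>"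
  shows "frob n m (msub (\<lambda>p q. \<sigma> (M p q)) (\<lambda>p q. \<sigma> (P p q))) \<le> frob n m (msub M P)"
  unfolding frob_def msub_def
proof (intro real_sqrt_le_mono sum_mono)
  fix p q
  have "\<bar>\<sigma> (M p q) - \<sigma> (P p q)\<bar> \<le> \<bar>M p q - P p q\<bar>" using assms by blast
  then show "(\<sigma> (M p q) - \<sigma> (P p q))\<^sup>2 \<le> (M p q - P p q)\<^sup>2"
    by (metis abs_ge_zero power2_abs power_mono)
qed

lemma frob_sigma:
  assumes "\<forall>x y. \<bar>\<sigma> x - \<sigma> y\<bar> \<le> \<bar>x - y\<bar>" "\<sigma> 0 = 0"
  shows "frob n m (\<lambda>p q. \<sigma> (M p q)) \<le> frob n m M"
  unfolding frob_def
proof (intro real_sqrt_le_mono sum_mono)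
  fix p q
  have "\<bar>\<sigma> (M p q)\<bar> \<le> \<bar>M p q\<bar>" using assms by (metis diff_zero)
  then show "(\<sigma> (M p q))\<^sup>2 \<le> (M p q)\<^sup>2"
    by (metis abs_ge_zero power2_abs power_mono)
qed

lemma frob_msub_zero: "frob n m (msub M (\<lambda>p q. 0)) = frob n m M"
  unfolding msub_def by simp

lemma mmul_msub: "mmul k (msub M P) W = msub (mmul k M W) (mmul k P W)"
  unfolding mmul_def msub_def by (simp add: left_diff_distrib sum_subtractf)

lemma cs_sum: "(\<Sum>q\<in>A. f q * g q :: real)\<^sup>2 \<le> (\<Sum>q\<in>A. (f q)\<^sup>2) * (\<Sum>q\<in>A. (g q)\<^sup>2)"
proof (cases "finite A")
  case True
  have "\<bar>\<Sum>q\<in>A. f q * g q\<bar> \<le> (\<Sum>q\<in>A. \<bar>f q * g q\<bar>)"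
    by (rule sum_abs)
  also have "\<dots> = (\<Sum>q\<in>A. \<bar>f q\<bar> * \<bar>g q\<bar>)" by (simp add: abs_mult)
  also have "\<dots> \<le> L2_set f A * L2_set g A" by (rule L2_set_mult_ineq)
  finally have h: "\<bar>\<Sum>q\<in>A. f q * g q\<bar> \<le> L2_set f A * L2_set g A" .
  have "(\<Sum>q\<in>A. f q * g q)\<^sup>2 = \<bar>\<Sum>q\<in>A. f q * g q\<bar>\<^sup>2" by simp
  also have "\<dots> \<le> (L2_set f A * L2_set g A)\<^sup>2"
    using h by (intro power_mono) auto
  also have "\<dots> = (\<Sum>q\<in>A. (f q)\<^sup>2) * (\<Sum>q\<in>A. (g q)\<^sup>2)"
    unfolding power_mult_distrib L2_set_def by (simp add: sum_nonneg)
  finally show ?thesis .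
qed simp

lemma cs_sum_sqrt: "(\<Sum>q\<in>A. f q * g q :: real) \<le> sqrt (\<Sum>q\<in>A. (f q)\<^sup>2) * sqrt (\<Sum>q\<in>A. (g q)\<^sup>2)"
proof -
  have "(\<Sum>q\<in>A. f q * g q) \<le> sqrt ((\<Sum>q\<in>A. f q * g q)\<^sup>2)" by simp
  also have "\<dots> \<le> sqrt ((\<Sum>q\<in>A. (f q)\<^sup>2) * (\<Sum>q\<in>A. (g q)\<^sup>2))"
    using cs_sum real_sqrt_le_mono by blast
  finally show ?thesis by (simp add: real_sqrt_mult)
qed

definition spset :: "nat \<Rightarrow> nat \<Rightarrow> mat \<Rightarrow> real set" where
  "spset m k M = {sqrt (\<Sum>p<m. (\<Sum>q<k. M p q * v q)\<^sup>2) | v. (\<Sum>q<k. (v q)\<^sup>2) \<le> 1}"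

lemma specn_spset: "specn m k M = Sup (spset m k M)"
  unfolding specn_def spset_def by simp

lemma spset_bdd: "bdd_above (spset m k M)"
proof (rule bdd_aboveI)
  fix x assume "x \<in> spset m k M"
  then obtain v where x: "x = sqrt (\<Sum>p<m. (\<Sum>q<k. M p q * v q)\<^sup>2)" and v: "(\<Sum>q<k. (v q)\<^sup>2) \<le> 1"
    unfolding spset_def by auto
  have "(\<Sum>p<m. (\<Sum>q<k. M p q * v q)\<^sup>2) \<le> (\<Sum>p<m. (\<Sum>q<k. (M p q)\<^sup>2) * (\<Sum>q<k. (v q)\<^sup>2))"
    by (intro sum_mono cs_sum)
  also have "\<dots> \<le> (\<Sum>p<m. (\<Sum>q<k. (M p q)\<^sup>2))"
    using v by (intro sum_mono) (simp add: mult_left_le sum_nonneg)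
  finally show "x \<le> frob m k M" unfolding x frob_def by (rule real_sqrt_le_mono)
qed

lemma specn_nonneg: "0 \<le> specn m k M"
proof -
  have "0 \<in> spset m k M" unfolding spset_def
    by (rule CollectI, rule exI[of _ "\<lambda>q. 0"]) simp
  then show ?thesis unfolding specn_spset using spset_bdd cSup_upper by blast
qed

lemma specn_vec: "sqrt (\<Sum>p<m. (\<Sum>q<k. M p q * v q)\<^sup>2) \<le> specn m k M * sqrt (\<Sum>q<k. (v q)\<^sup>2)"
proof (cases "(\<Sum>q<k. (v q)\<^sup>2) = 0")
  case True
  then have "\<forall>q<k. v q = 0" by (simp add: sum_nonneg_eq_0_iff)
  then show ?thesis using True by simp
next
  case False
  define s where "s = sqrt (\<Sum>q<k. (v q)\<^sup>2)"
  have sp: "s > 0" using False unfolding s_def by (simp add: sum_nonneg order_le_neq_trans)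
  define u where "u = (\<lambda>q. v q / s)"
  have "(\<Sum>q<k. (u q)\<^sup>2) = (\<Sum>q<k. (v q)\<^sup>2) / s\<^sup>2"
    unfolding u_def by (simp add: power_divide sum_divide_distrib)
  also have "\<dots> = 1" using sp False unfolding s_def by (simp add: sum_nonneg)
  finally have "sqrt (\<Sum>p<m. (\<Sum>q<k. M p q * u q)\<^sup>2) \<in> spset m k M"
    unfolding spset_def by force
  then have le: "sqrt (\<Sum>p<m. (\<Sum>q<k. M p q * u q)\<^sup>2) \<le> specn m k M"
    unfolding specn_spset using spset_bdd cSup_upper by blast
  have "(\<Sum>p<m. (\<Sum>q<k. M p q * v q)\<^sup>2) = s\<^sup>2 * (\<Sum>p<m. (\<Sum>q<k. M p q * u q)\<^sup>2)"
  proof -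
    have "\<And>p. (\<Sum>q<k. M p q * v q) = s * (\<Sum>q<k. M p q * u q)"
      unfolding u_def using sp by (simp add: sum_distrib_left)
    then show ?thesis by (simp add: power_mult_distrib sum_distrib_left[symmetric])
  qed
  then have "sqrt (\<Sum>p<m. (\<Sum>q<k. M p q * v q)\<^sup>2) = s * sqrt (\<Sum>p<m. (\<Sum>q<k. M p q * u q)\<^sup>2)"
    using sp by (simp add: real_sqrt_mult)
  also have "\<dots> \<le> s * specn m k M" using le sp by simp
  finally show ?thesis unfolding s_def by (simp add: mult.commute)
qed

lemma sqrt_le_sq: assumes "sqrt a \<le> b" "0 \<le> a" shows "a \<le> b\<^sup>2"
  using assms by (metis real_sqrt_ge_zero real_sqrt_pow2 power_mono)

lemma frob_le_from_sq: assumes "(frob n m M)\<^sup>2 \<le> c\<^sup>2 * (frob n' m' P)\<^sup>2" "0 \<le> c"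
  shows "frob n m M \<le> c * frob n' m' P"
proof -
  have "(frob n m M)\<^sup>2 \<le> (c * frob n' m' P)\<^sup>2" using assms by (simp add: power_mult_distrib)
  then show ?thesis using assms(2) frob_nonneg by (meson mult_nonneg_nonneg power2_le_imp_le)
qed

lemma frob_left_mul: "frob n m (mmul n M H) \<le> specn n n M * frob n m H"
proof (rule frob_le_from_sq[OF _ specn_nonneg])
  have "(frob n m (mmul n M H))\<^sup>2 = (\<Sum>q<m. \<Sum>p<n. (\<Sum>t<n. M p t * H t q)\<^sup>2)"
    unfolding frob_sq mmul_def by (rule sum.swap)
  also have "\<dots> \<le> (\<Sum>q<m. (specn n n M)\<^sup>2 * (\<Sum>t<n. (H t q)\<^sup>2))"
  proof (rule sum_mono)
    fix q
    show "(\<Sum>p<n. (\<Sum>t<n. M p t * H t q)\<^sup>2) \<le> (specn n n M)\<^sup>2 * (\<Sum>t<n. (H t q)\<^sup>2)"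
      using sqrt_le_sq[OF specn_vec[where m=n and k=n and M=M and v="\<lambda>t. H t q"]]
      by (simp add: sum_nonneg power_mult_distrib)
  qed
  also have "\<dots> = (specn n n M)\<^sup>2 * (frob n m H)\<^sup>2"
    unfolding frob_sq sum_distrib_left by (rule sum.swap)
  finally show "(frob n m (mmul n M H))\<^sup>2 \<le> (specn n n M)\<^sup>2 * (frob n m H)\<^sup>2" .
qed

lemma row_specn: "(\<Sum>q<m. (\<Sum>t<k. h t * W t q)\<^sup>2) \<le> (specn k m W)\<^sup>2 * (\<Sum>t<k. (h t)\<^sup>2)"
proof -
  define u where "u = (\<lambda>q. \<Sum>t<k. h t * W t q)"
  define U where "U = (\<Sum>q<m. (u q)\<^sup>2)"
  have U0: "0 \<le> U" unfolding U_def by (simp add: sum_nonneg)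
  have "U = (\<Sum>q<m. u q * (\<Sum>t<k. h t * W t q))" unfolding U_def u_def by (simp add: power2_eq_square)
  also have "\<dots> = (\<Sum>q<m. \<Sum>t<k. h t * (W t q * u q))"
    unfolding sum_distrib_left sum_distrib_right by (simp add: mult_ac)
  also have "\<dots> = (\<Sum>t<k. \<Sum>q<m. h t * (W t q * u q))" by (rule sum.swap)
  also have "\<dots> = (\<Sum>t<k. h t * (\<Sum>q<m. W t q * u q))"
    by (simp add: sum_distrib_left)
  also have "\<dots> \<le> sqrt (\<Sum>t<k. (h t)\<^sup>2) * sqrt (\<Sum>t<k. (\<Sum>q<m. W t q * u q)\<^sup>2)"
    by (rule cs_sum_sqrt)
  also have "\<dots> \<le> sqrt (\<Sum>t<k. (h t)\<^sup>2) * (specn k m W * sqrt U)"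
    unfolding U_def by (intro mult_left_mono specn_vec) (auto simp: sum_nonneg)
  finally have "U \<le> (sqrt (\<Sum>t<k. (h t)\<^sup>2) * specn k m W) * sqrt U" by (simp add: mult_ac)
  then have "sqrt U * sqrt U \<le> (sqrt (\<Sum>t<k. (h t)\<^sup>2) * specn k m W) * sqrt U"
    using U0 by simp
  moreover have A0: "0 \<le> sqrt (\<Sum>t<k. (h t)\<^sup>2) * specn k m W"
    by (intro mult_nonneg_nonneg real_sqrt_ge_zero sum_nonneg specn_nonneg) simp
  ultimately have "sqrt U \<le> sqrt (\<Sum>t<k. (h t)\<^sup>2) * specn k m W"
  proof (cases "sqrt U = 0")
    case False
    then have "0 < sqrt U" using U0 by simp
    then show ?thesis using \<open>sqrt U * sqrt U \<le> _\<close> mult_right_le_imp_le by blast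
  qed (use A0 in simp)
  then have "U \<le> (sqrt (\<Sum>t<k. (h t)\<^sup>2) * specn k m W)\<^sup>2"
    using sqrt_le_sq U0 by blast
  then show ?thesis unfolding U_def u_def by (simp add: power_mult_distrib sum_nonneg mult_ac)
qed

lemma frob_right_mul: "frob n m (mmul k H W) \<le> specn k m W * frob n k H"
proof (rule frob_le_from_sq[OF _ specn_nonneg])
  have "(frob n m (mmul k H W))\<^sup>2 = (\<Sum>p<n. \<Sum>q<m. (\<Sum>t<k. H p t * W t q)\<^sup>2)"
    unfolding frob_sq mmul_def by simp
  also have "\<dots> \<le> (\<Sum>p<n. (specn k m W)\<^sup>2 * (\<Sum>t<k. (H p t)\<^sup>2))"
    by (intro sum_mono row_specn)
  also have "\<dots> = (specn k m W)\<^sup>2 * (frob n k H)\<^sup>2"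
    unfolding frob_sq by (simp add: sum_distrib_left)
  finally show "(frob n m (mmul k H W))\<^sup>2 \<le> (specn k m W)\<^sup>2 * (frob n k H)\<^sup>2" .
qed

lemma frob_mul_frob: "frob n m (mmul k Y V) \<le> frob n k Y * frob k m V"
proof -
  have "(frob n m (mmul k Y V))\<^sup>2 = (\<Sum>p<n. \<Sum>q<m. (\<Sum>t<k. Y p t * V t q)\<^sup>2)"
    unfolding frob_sq mmul_def by simp
  also have "\<dots> \<le> (\<Sum>p<n. \<Sum>q<m. (\<Sum>t<k. (Y p t)\<^sup>2) * (\<Sum>t<k. (V t q)\<^sup>2))"
    by (intro sum_mono cs_sum)
  also have "\<dots> = (frob n k Y)\<^sup>2 * (frob k m V)\<^sup>2"
  proof -
    have "(\<Sum>q<m. (\<Sum>t<k. (V t q)\<^sup>2)) = (\<Sum>t<k. \<Sum>q<m. (V t q)\<^sup>2)" by (rule sum.swap)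
    then show ?thesis unfolding frob_sq sum_product[symmetric] by simp
  qed
  finally have "(frob n m (mmul k Y V))\<^sup>2 \<le> (frob n k Y * frob k m V)\<^sup>2"
    by (simp add: power_mult_distrib)
  then show ?thesis using frob_nonneg by (meson mult_nonneg_nonneg power2_le_imp_le)
qed

lemma frob_le_norm21: "frob k m V \<le> norm21 k m V"
proof -
  have "frob k m V = sqrt (\<Sum>q<m. (\<Sum>p<k. (V p q)\<^sup>2))"
    unfolding frob_def by (subst sum.swap) (rule refl)
  also have "\<dots> = L2_set (\<lambda>q. sqrt (\<Sum>p<k. (V p q)\<^sup>2)) {..<m}"
    unfolding L2_set_def by (simp add: sum_nonneg)
  also have "\<dots> \<le> (\<Sum>q<m. sqrt (\<Sum>p<k. (V p q)\<^sup>2))"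
    by (rule L2_set_le_sum) (simp add: sum_nonneg)
  finally show ?thesis unfolding norm21_def .
qed



lemma frob_g:
  assumes sig: "\<forall>x y. \<bar>\<sigma> x - \<sigma> y\<bar> \<le> \<bar>x - y\<bar>" "\<sigma> 0 = 0"
  shows "frob n m (if j = 0 then M else (\<lambda>p q. \<sigma> (M p q))) \<le> frob n m M"
  using frob_sigma[OF sig] by simp

lemma stage_bound:
  assumes sig: "\<forall>x y. \<bar>\<sigma> x - \<sigma> y\<bar> \<le> \<bar>x - y\<bar>" "\<sigma> 0 = 0"
    and H: "frob n (d 0) H \<le> B"
    and ws: "\<forall>i\<in>{1..j}. specn (d (i-1)) (d i) (W i) \<le> \<kappa> i"
  shows "frob n (d j) (gin_stage \<sigma> At n d W H j) \<le> specn n n At * B * (\<Prod>i=1..j. \<kappa> i)"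
  using ws
proof (induction j)
  case 0
  have "frob n (d 0) (mmul n At H) \<le> specn n n At * frob n (d 0) H" by (rule frob_left_mul)
  also have "\<dots> \<le> specn n n At * B" using H specn_nonneg by (intro mult_left_mono) auto
  finally show ?case by simp
next
  case (Suc j)
  have IH: "frob n (d j) (gin_stage \<sigma> At n d W H j) \<le> specn n n At * B * (\<Prod>i=1..j. \<kappa> i)"
    using Suc by auto
  have kS: "specn (d j) (d (Suc j)) (W (Suc j)) \<le> \<kappa> (Suc j)"
    using bspec[OF Suc.prems, of "Suc j"] by simp
  have k0: "0 \<le> \<kappa> (Suc j)" using kS specn_nonneg order.trans by blast
  let ?G = "if j = 0 then gin_stage \<sigma> At n d W H 0 else (\<lambda>p q. \<sigma> (gin_stage \<sigma> At n d W H j p q))"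
  have G: "frob n (d j) ?G \<le> frob n (d j) (gin_stage \<sigma> At n d W H j)"
    using frob_sigma[OF sig] by simp
  have "frob n (d (Suc j)) (gin_stage \<sigma> At n d W H (Suc j))
        \<le> specn (d j) (d (Suc j)) (W (Suc j)) * frob n (d j) ?G"
    by (simp add: frob_right_mul)
  also have "\<dots> \<le> \<kappa> (Suc j) * (specn n n At * B * (\<Prod>i=1..j. \<kappa> i))"
    using G IH kS k0 frob_nonneg order.trans by (intro mult_mono) blast+
  also have "\<dots> = specn n n At * B * (\<Prod>i=1..Suc j. \<kappa> i)"
    by (simp add: prod.nat_ivl_Suc' mult_ac)
  finally show ?case .
qed

lemma net_bound:
  assumes sig: "\<forall>x y. \<bar>\<sigma> x - \<sigma> y\<bar> \<le> \<bar>x - y\<bar>" "\<sigma> 0 = 0"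
    and dim_first: "d 1 0 = d0"
    and dim_chain: "\<forall>k\<in>{2..L}. d k 0 = d (k - 1) r"
    and lL: "l \<le> L"
    and W_ok: "\<forall>k\<in>{1..<l}. weights_ok r (d k) (\<kappa> k) (b k) (W k)"
  shows "k < l \<Longrightarrow> frob n (d (Suc k) 0) (gin_net \<sigma> At n r d W X k)
          \<le> specn n n At ^ k * (\<Prod>i=1..k. (\<Prod>j=1..r. \<kappa> i j)) * frob n d0 X"
proof (induction k)
  case 0
  then show ?case using dim_first by simp
next
  case (Suc k)
  have IH: "frob n (d (Suc k) 0) (gin_net \<sigma> At n r d W X k)
          \<le> specn n n At ^ k * (\<Prod>i=1..k. (\<Prod>j=1..r. \<kappa> i j)) * frob n d0 X"
    using Suc by simp
  have wk: "weights_ok r (d (Suc k)) (\<kappa> (Suc k)) (b (Suc k)) (W (Suc k))"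
    using W_ok Suc.prems by auto
  then have ws: "\<forall>i\<in>{1..r}. specn (d (Suc k) (i-1)) (d (Suc k) i) (W (Suc k) i) \<le> \<kappa> (Suc k) i"
    unfolding weights_ok_def by auto
  have "frob n (d (Suc k) r) (gin_net \<sigma> At n r d W X (Suc k))
     \<le> specn n n At * (specn n n At ^ k * (\<Prod>i=1..k. (\<Prod>j=1..r. \<kappa> i j)) * frob n d0 X)
        * (\<Prod>j=1..r. \<kappa> (Suc k) j)"
    unfolding gin_net.simps gin_layer_def
    by (rule stage_bound[OF sig IH ws])
  also have "\<dots> = specn n n At ^ Suc k * (\<Prod>i=1..Suc k. (\<Prod>j=1..r. \<kappa> i j)) * frob n d0 X"
    by (simp add: prod.nat_ivl_Suc' mult_ac)
  finally have *: "frob n (d (Suc k) r) (gin_net \<sigma> At n r d W X (Suc k))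
     \<le> specn n n At ^ Suc k * (\<Prod>i=1..Suc k. (\<Prod>j=1..r. \<kappa> i j)) * frob n d0 X" .
  have "d (Suc (Suc k)) 0 = d (Suc k) r" using dim_chain Suc.prems lL by auto
  then show ?case using * by simp
qed



fun Ek :: "'i set \<Rightarrow> ('i \<Rightarrow> real) \<Rightarrow> nat \<Rightarrow> ('i list \<Rightarrow> real) \<Rightarrow> real" where
  "Ek I p 0 f = f []"
| "Ek I p (Suc k) f = (\<Sum>i\<in>I. p i * Ek I p k (\<lambda>J. f (i # J)))"

lemma Ek_sum: "Ek I p k (\<lambda>J. \<Sum>c\<in>D. f c J) = (\<Sum>c\<in>D. Ek I p k (f c))"
proof (induction k arbitrary: f)
  case 0
  then show ?case by simp
next
  case (Suc k)
  have "Ek I p (Suc k) (\<lambda>J. \<Sum>c\<in>D. f c J) = (\<Sum>i\<in>I. p i * (\<Sum>c\<in>D. Ek I p k (\<lambda>J. f c (i # J))))"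
    using Suc[of "\<lambda>c J. f c (_ # J)"] by simp
  also have "\<dots> = (\<Sum>i\<in>I. \<Sum>c\<in>D. p i * Ek I p k (\<lambda>J. f c (i # J)))"
    by (simp add: sum_distrib_left)
  also have "\<dots> = (\<Sum>c\<in>D. \<Sum>i\<in>I. p i * Ek I p k (\<lambda>J. f c (i # J)))"
    by (rule sum.swap)
  finally show ?case by simp
qed

lemma Ek_cmult: "Ek I p k (\<lambda>J. a * f J) = a * Ek I p k f"
proof (induction k arbitrary: f)
  case (Suc k)
  then show ?case by (simp add: sum_distrib_left mult_ac)
qed simp

lemma Ek_var:
  assumes p1: "sum p I = 1"
  shows "Ek I p k (\<lambda>J. (z - sum_list (map a J))\<^sup>2)
        = (z - real k * (\<Sum>i\<in>I. p i * a i))\<^sup>2 + real k * (\<Sum>i\<in>I. p i * (a i - (\<Sum>i\<in>I. p i * a i))\<^sup>2)"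
proof (induction k arbitrary: z)
  case 0
  then show ?case by simp
next
  case (Suc k)
  define m where "m = (\<Sum>i\<in>I. p i * a i)"
  define v where "v = (\<Sum>i\<in>I. p i * (a i - m)\<^sup>2)"
  define w where "w = z - real (Suc k) * m"
  have pm0: "(\<Sum>i\<in>I. p i * (a i - m)) = 0"
    using p1 unfolding m_def by (simp add: right_diff_distrib sum_subtractf sum_distrib_right[symmetric])
  have "Ek I p (Suc k) (\<lambda>J. (z - sum_list (map a J))\<^sup>2)
      = (\<Sum>i\<in>I. p i * Ek I p k (\<lambda>J. ((z - a i) - sum_list (map a J))\<^sup>2))"
    by (simp add: algebra_simps)
  also have "\<dots> = (\<Sum>i\<in>I. p i * ((z - a i - real k * m)\<^sup>2 + real k * v))"
    using Suc unfolding m_def v_def by simp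
  also have "\<dots> = (\<Sum>i\<in>I. p i * ((w - (a i - m))\<^sup>2 + real k * v))"
    unfolding w_def by (simp add: algebra_simps)
  also have "\<dots> = (\<Sum>i\<in>I. (w\<^sup>2 + real k * v) * p i - (2 * w) * (p i * (a i - m)) + p i * (a i - m)\<^sup>2)"
    by (intro sum.cong) (auto simp: power2_eq_square algebra_simps)
  also have "\<dots> = (w\<^sup>2 + real k * v) * sum p I - (2 * w) * (\<Sum>i\<in>I. p i * (a i - m)) + v"
    unfolding v_def by (simp add: sum.distrib sum_subtractf sum_distrib_left)
  also have "\<dots> = w\<^sup>2 + real (Suc k) * v" using p1 pm0 by (simp add: algebra_simps)
  finally show ?case unfolding w_def m_def v_def .
qed

lemma Ek_exists:
  assumes fin: "finite I" and ne: "I \<noteq> {}" and pn: "\<forall>i\<in>I. 0 \<le> p i" and p1: "sum p I = 1"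
  shows "\<exists>J. set J \<subseteq> I \<and> length J = k \<and> f J \<le> Ek I p k f"
proof (induction k arbitrary: f)
  case 0
  then show ?case by simp
next
  case (Suc k)
  define e where "e = (\<lambda>i. Ek I p k (\<lambda>J. f (i # J)))"
  have "Min (e ` I) \<in> e ` I" using fin ne by simp
  then obtain i0 where i0: "i0 \<in> I" "e i0 = Min (e ` I)" by force
  have "e i0 = (\<Sum>i\<in>I. p i * e i0)" using p1 by (simp add: sum_distrib_right[symmetric])
  also have "\<dots> \<le> (\<Sum>i\<in>I. p i * e i)"
    using pn i0 fin by (intro sum_mono mult_left_mono) auto
  finally have le: "e i0 \<le> Ek I p (Suc k) f" unfolding e_def by simp
  obtain J where J: "set J \<subseteq> I" "length J = k" "f (i0 # J) \<le> e i0"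
    using Suc[of "\<lambda>J. f (i0 # J)"] unfolding e_def by blast
  show ?case using J le i0 by (intro exI[of _ "i0 # J"]) auto
qed



definition ip :: "nat \<Rightarrow> nat \<Rightarrow> mat \<Rightarrow> mat \<Rightarrow> real" where
  "ip n m M P = (\<Sum>p<n. \<Sum>q<m. M p q * P p q)"

lemma ip_le: "ip n m M P \<le> frob n m M * frob n m P"
proof -
  have "ip n m M P = (\<Sum>c\<in>{..<n}\<times>{..<m}. (\<lambda>(p,q). M p q) c * (\<lambda>(p,q). P p q) c)"
    unfolding ip_def by (simp add: sum.cartesian_product case_prod_beta)
  also have "\<dots> \<le> (\<Sum>c\<in>{..<n}\<times>{..<m}. \<bar>(\<lambda>(p,q). M p q) c\<bar> * \<bar>(\<lambda>(p,q). P p q) c\<bar>)"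
    by (intro sum_mono) (metis abs_ge_self abs_mult)
  also have "\<dots> \<le> frob n m M * frob n m P"
    unfolding frob_L2 by (rule L2_set_mult_ineq)
  finally show ?thesis .
qed

lemma frob_sq_diff_scale:
  "(frob n m (msub x (\<lambda>p q. a * y p q)))\<^sup>2 = (frob n m x)\<^sup>2 - 2 * a * ip n m x y + a\<^sup>2 * (frob n m y)\<^sup>2"
  unfolding frob_sq msub_def ip_def
  by (simp add: power2_diff sum.distrib sum_subtractf sum_distrib_left power_mult_distrib mult_ac)

definition proj :: "nat \<Rightarrow> nat \<Rightarrow> real \<Rightarrow> mat \<Rightarrow> mat" where
  "proj n m R y = (if frob n m y \<le> R then y else (\<lambda>p q. (R / frob n m y) * y p q))"

lemma proj_norm: assumes "0 \<le> R" shows "frob n m (proj n m R y) \<le> R"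
proof (cases "frob n m y \<le> R")
  case False
  then have "frob n m (proj n m R y) = \<bar>R / frob n m y\<bar> * frob n m y"
    unfolding proj_def using frob_scale[of n m "R / frob n m y" y] by simp
  also have "\<dots> = R" using False assms by simp
  finally show ?thesis by simp
qed (simp add: proj_def)

lemma proj_close:
  assumes x: "frob n m x \<le> R"
  shows "frob n m (msub x (proj n m R y)) \<le> frob n m (msub x y)"
proof (cases "frob n m y \<le> R")
  case True
  then show ?thesis unfolding proj_def by simp
next
  case False
  define Ny where "Ny = frob n m y"
  define \<mu> where "\<mu> = R / Ny"
  have R0: "0 \<le> R" using x frob_nonneg order.trans by blast
  have Ny: "R < Ny" using False unfolding Ny_def by simp
  have Ny0: "0 < Ny" using R0 Ny by simp
  have mu1: "\<mu> \<le> 1" "0 \<le> \<mu>" unfolding \<mu>_def using Ny Ny0 R0 by auto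
  have muN: "\<mu> * Ny = R" unfolding \<mu>_def using Ny0 by simp
  have I: "ip n m x y \<le> R * Ny" unfolding Ny_def
    using ip_le[of n m x y] x frob_nonneg[of n m y] by (meson mult_right_mono order.trans)
  have e1: "(frob n m (msub x (proj n m R y)))\<^sup>2 = (frob n m x)\<^sup>2 - 2 * \<mu> * ip n m x y + \<mu>\<^sup>2 * Ny\<^sup>2"
    unfolding proj_def using False frob_sq_diff_scale[of n m x \<mu> y] unfolding \<mu>_def Ny_def by simp
  have e2: "(frob n m (msub x y))\<^sup>2 = (frob n m x)\<^sup>2 - 2 * 1 * ip n m x y + 1\<^sup>2 * Ny\<^sup>2"
    using frob_sq_diff_scale[of n m x 1 y] unfolding Ny_def by simp
  have "2 * (1 - \<mu>) * ip n m x y \<le> 2 * (1 - \<mu>) * (R * Ny)"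
    using I mu1 by (intro mult_left_mono) auto
  also have "\<dots> \<le> (1 - \<mu>\<^sup>2) * Ny\<^sup>2"
  proof -
    have "(1 - \<mu>\<^sup>2) * Ny\<^sup>2 - 2 * (1 - \<mu>) * (R * Ny) = (1 - \<mu>) * Ny * (Ny - R)"
      using muN by (simp add: power2_eq_square algebra_simps)
    also have "\<dots> \<ge> 0" using mu1 Ny0 Ny by simp
    finally show ?thesis by simp
  qed
  finally have "(frob n m (msub x (proj n m R y)))\<^sup>2 \<le> (frob n m (msub x y))\<^sup>2"
    unfolding e1 e2 by (simp add: algebra_simps)
  then show ?thesis using frob_nonneg power2_le_imp_le by blast
qed



definition cn :: "nat \<Rightarrow> mat \<Rightarrow> nat \<Rightarrow> real" where
  "cn n Y a = sqrt (\<Sum>p<n. (Y p a)\<^sup>2)"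

definition yt :: "nat \<Rightarrow> mat \<Rightarrow> nat \<Rightarrow> nat \<Rightarrow> real" where
  "yt n Y p a = (if cn n Y a = 0 then 0 else Y p a / cn n Y a)"

definition atom :: "nat \<Rightarrow> mat \<Rightarrow> real \<Rightarrow> nat \<times> nat \<times> bool \<Rightarrow> mat" where
  "atom n Y \<alpha> i = (\<lambda>p q'. if q' = fst (snd i) then (if snd (snd i) then \<alpha> else - \<alpha>) * yt n Y p (fst i) else 0)"

definition Iset :: "nat \<Rightarrow> nat \<Rightarrow> (nat \<times> nat \<times> bool) set" where
  "Iset dI dO = {..<dI} \<times> {..<dO} \<times> {True, False}"

definition Tsum :: "nat \<Rightarrow> nat \<Rightarrow> nat \<Rightarrow> mat \<Rightarrow> real \<Rightarrow> mat \<Rightarrow> real" where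
  "Tsum n dI dO Y \<alpha> V = (\<Sum>a<dI. \<Sum>q<dO. \<bar>V a q\<bar> * cn n Y a / \<alpha>)"

definition pw :: "nat \<Rightarrow> nat \<Rightarrow> nat \<Rightarrow> mat \<Rightarrow> real \<Rightarrow> mat \<Rightarrow> nat \<times> nat \<times> bool \<Rightarrow> real" where
  "pw n dI dO Y \<alpha> V i = (let a = fst i; q = fst (snd i); s = snd (snd i) in
     (if s = (0 \<le> V a q) then \<bar>V a q\<bar> * cn n Y a / \<alpha> else 0)
     + (if a = 0 \<and> q = 0 then (1 - Tsum n dI dO Y \<alpha> V) / 2 else 0))"

lemma finite_Iset: "finite (Iset dI dO)" unfolding Iset_def by simp

lemma card_Iset: "card (Iset dI dO) = 2 * dI * dO"
  unfolding Iset_def by (simp add: card_cartesian_product)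

lemma sum_Iset: "(\<Sum>i\<in>Iset dI dO. g i) = (\<Sum>a<dI. \<Sum>q<dO. g (a,q,True) + g (a,q,False))"
proof -
  have "(\<Sum>i\<in>Iset dI dO. g i) = (\<Sum>a<dI. \<Sum>y\<in>{..<dO} \<times> {True, False}. g (a, y))"
    unfolding Iset_def using sum.cartesian_product[where g="\<lambda>a y. g (a,y)" and A="{..<dI}" and B="{..<dO} \<times> {True, False}"]
    by simp
  also have "\<dots> = (\<Sum>a<dI. \<Sum>q<dO. \<Sum>s\<in>{True, False}. g (a, q, s))"
  proof (rule sum.cong[OF refl])
    fix a
    show "(\<Sum>y\<in>{..<dO} \<times> {True, False}. g (a, y)) = (\<Sum>q<dO. \<Sum>s\<in>{True, False}. g (a, q, s))"
      using sum.cartesian_product[where g="\<lambda>q s. g (a,q,s)" and A="{..<dO}" and B="{True, False}"]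
      by simp
  qed
  finally show ?thesis by simp
qed

lemma sum_cn_sq: "(\<Sum>a<dI. (cn n Y a)\<^sup>2) = (frob n dI Y)\<^sup>2"
  unfolding cn_def frob_sq by (simp add: sum_nonneg sum.swap[of _ "{..<n}"])

lemma Tsum_le:
  assumes a0: "0 < \<alpha>" and nb: "norm21 dI dO V * frob n dI Y \<le> \<alpha>"
  shows "Tsum n dI dO Y \<alpha> V \<le> 1"
proof -
  have "(\<Sum>a<dI. \<Sum>q<dO. \<bar>V a q\<bar> * cn n Y a) = (\<Sum>q<dO. \<Sum>a<dI. \<bar>V a q\<bar> * cn n Y a)"
    by (rule sum.swap)
  also have "\<dots> \<le> (\<Sum>q<dO. sqrt (\<Sum>a<dI. (\<bar>V a q\<bar>)\<^sup>2) * sqrt (\<Sum>a<dI. (cn n Y a)\<^sup>2))"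
    by (intro sum_mono cs_sum_sqrt)
  also have "\<dots> = norm21 dI dO V * frob n dI Y"
    unfolding sum_cn_sq norm21_def by (simp add: sum_distrib_right frob_nonneg)
  finally have "(\<Sum>a<dI. \<Sum>q<dO. \<bar>V a q\<bar> * cn n Y a) \<le> \<alpha>" using nb by simp
  then show ?thesis unfolding Tsum_def using a0
    by (simp add: sum_divide_distrib[symmetric] divide_le_eq_1)
qed

lemma Tsum_nonneg: "0 < \<alpha> \<Longrightarrow> 0 \<le> Tsum n dI dO Y \<alpha> V"
  unfolding Tsum_def cn_def by (intro sum_nonneg) (simp add: sum_nonneg)

lemma pw_nonneg:
  assumes "0 < \<alpha>" "Tsum n dI dO Y \<alpha> V \<le> 1"
  shows "0 \<le> pw n dI dO Y \<alpha> V i"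
proof -
  have c: "0 \<le> \<bar>V a q\<bar> * cn n Y a / \<alpha>" for a q using assms(1) unfolding cn_def by (simp add: sum_nonneg)
  have t: "0 \<le> (1 - Tsum n dI dO Y \<alpha> V) / 2" using assms(2) by simp
  show ?thesis unfolding pw_def Let_def using c t by (auto intro!: add_nonneg_nonneg)
qed

lemma sum_single2:
  assumes "(0::nat) < dI" "(0::nat) < dO"
  shows "(\<Sum>a<dI. \<Sum>q<dO. (if a = 0 \<and> q = 0 then c else 0)) = (c::real)"
proof -
  have "(\<Sum>a<dI. \<Sum>q<dO. (if a = 0 \<and> q = 0 then c else 0)) = (\<Sum>a<dI. if a = 0 then c else 0)"
    using assms by (intro sum.cong) (auto simp: if_distrib sum.delta)
  also have "\<dots> = c" using assms by (simp add: sum.delta)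
  finally show ?thesis .
qed

lemma pw_sum:
  assumes "0 < \<alpha>" "0 < dI" "0 < dO"
  shows "(\<Sum>i\<in>Iset dI dO. pw n dI dO Y \<alpha> V i) = 1"
proof -
  define T where "T = Tsum n dI dO Y \<alpha> V"
  have "(\<Sum>i\<in>Iset dI dO. pw n dI dO Y \<alpha> V i)
     = (\<Sum>a<dI. \<Sum>q<dO. \<bar>V a q\<bar> * cn n Y a / \<alpha> + (if a = 0 \<and> q = 0 then 1 - T else 0))"
    unfolding sum_Iset pw_def Let_def T_def by (intro sum.cong refl) auto
  also have "\<dots> = T + (1 - T)"
    unfolding sum.distrib sum_single2[OF assms(2,3)] T_def Tsum_def ..
  finally show ?thesis by simp
qed

lemma yt_cn: assumes "p0 < n" shows "yt n Y p0 a * cn n Y a = Y p0 a"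
proof (cases "cn n Y a = 0")
  case True
  then have "(\<Sum>p<n. (Y p a)\<^sup>2) = 0" unfolding cn_def by simp
  then have "\<forall>p<n. (Y p a)\<^sup>2 = 0" by (simp add: sum_nonneg_eq_0_iff)
  then show ?thesis using assms True by (simp add: yt_def)
qed (simp add: yt_def)

lemma pw_mean:
  assumes a0: "0 < \<alpha>" and p0: "p0 < n" and q0: "q0 < dO"
  shows "(\<Sum>i\<in>Iset dI dO. pw n dI dO Y \<alpha> V i * atom n Y \<alpha> i p0 q0) = mmul dI Y V p0 q0"
proof -
  have "(\<Sum>i\<in>Iset dI dO. pw n dI dO Y \<alpha> V i * atom n Y \<alpha> i p0 q0)
      = (\<Sum>a<dI. \<Sum>q<dO. if q = q0 then \<alpha> * yt n Y p0 a * (pw n dI dO Y \<alpha> V (a,q,True) - pw n dI dO Y \<alpha> V (a,q,False)) else 0)"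
    unfolding sum_Iset atom_def by (intro sum.cong refl) (auto simp: algebra_simps)
  also have "\<dots> = (\<Sum>a<dI. \<alpha> * yt n Y p0 a * (pw n dI dO Y \<alpha> V (a,q0,True) - pw n dI dO Y \<alpha> V (a,q0,False)))"
    using q0 by (simp add: sum.delta')
  also have "\<dots> = (\<Sum>a<dI. Y p0 a * V a q0)"
  proof (intro sum.cong refl)
    fix a
    have "pw n dI dO Y \<alpha> V (a,q0,True) - pw n dI dO Y \<alpha> V (a,q0,False) = V a q0 * cn n Y a / \<alpha>"
      unfolding pw_def Let_def by (cases "0 \<le> V a q0") auto
    then have e: "\<alpha> * (pw n dI dO Y \<alpha> V (a,q0,True) - pw n dI dO Y \<alpha> V (a,q0,False)) = V a q0 * cn n Y a"
      using a0 by simp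
    have "\<alpha> * yt n Y p0 a * (pw n dI dO Y \<alpha> V (a,q0,True) - pw n dI dO Y \<alpha> V (a,q0,False))
       = yt n Y p0 a * (\<alpha> * (pw n dI dO Y \<alpha> V (a,q0,True) - pw n dI dO Y \<alpha> V (a,q0,False)))"
      by (simp add: mult_ac)
    also have "\<dots> = V a q0 * (yt n Y p0 a * cn n Y a)" unfolding e by (simp add: mult_ac)
    also have "\<dots> = Y p0 a * V a q0" using yt_cn[OF p0, of Y a] by simp
    finally show "\<alpha> * yt n Y p0 a * (pw n dI dO Y \<alpha> V (a,q0,True) - pw n dI dO Y \<alpha> V (a,q0,False)) = Y p0 a * V a q0" .
  qed
  finally show ?thesis unfolding mmul_def .
qed

lemma atom_norm:
  assumes i: "i \<in> Iset dI dO"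
  shows "(\<Sum>p<n. \<Sum>q<dO. (atom n Y \<alpha> i p q)\<^sup>2) \<le> \<alpha>\<^sup>2"
proof -
  obtain a q1 s where iq: "i = (a, q1, s)" "q1 < dO" using i unfolding Iset_def by auto
  have "(\<Sum>p<n. \<Sum>q<dO. (atom n Y \<alpha> i p q)\<^sup>2) = (\<Sum>p<n. \<alpha>\<^sup>2 * (yt n Y p a)\<^sup>2)"
  proof (intro sum.cong refl)
    fix p
    have "(atom n Y \<alpha> i p q)\<^sup>2 = (if q = q1 then \<alpha>\<^sup>2 * (yt n Y p a)\<^sup>2 else 0)" for q
      unfolding atom_def iq by (cases s) (auto simp: power_mult_distrib)
    then show "(\<Sum>q<dO. (atom n Y \<alpha> i p q)\<^sup>2) = \<alpha>\<^sup>2 * (yt n Y p a)\<^sup>2"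
      using iq(2) by (simp add: sum.delta')
  qed
  also have "\<dots> = \<alpha>\<^sup>2 * (\<Sum>p<n. (yt n Y p a)\<^sup>2)" by (simp add: sum_distrib_left)
  also have "\<dots> \<le> \<alpha>\<^sup>2 * 1"
  proof (intro mult_left_mono)
    show "(\<Sum>p<n. (yt n Y p a)\<^sup>2) \<le> 1"
    proof (cases "cn n Y a = 0")
      case False
      have "(\<Sum>p<n. (yt n Y p a)\<^sup>2) = (\<Sum>p<n. (Y p a)\<^sup>2) / (cn n Y a)\<^sup>2"
        unfolding yt_def using False by (simp add: power_divide sum_divide_distrib)
      also have "\<dots> = 1" using False unfolding cn_def by (simp add: sum_nonneg)
      finally show ?thesis by simp
    qed (simp add: yt_def)
  qed simp
  finally show ?thesis by simp
qed



definition center :: "nat \<Rightarrow> mat \<Rightarrow> real \<Rightarrow> nat \<Rightarrow> (nat\<times>nat\<times>bool) list \<Rightarrow> mat" where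
  "center n Y \<alpha> k J = (\<lambda>p q. (1 / (real k + sqrt k)) * sum_list (map (\<lambda>i. atom n Y \<alpha> i p q) J))"

lemma coord_E:
  assumes p1: "sum p I = 1" and mean: "(\<Sum>i\<in>I. p i * A i) = x" and k1: "1 \<le> k"
  shows "Ek I p k (\<lambda>J. (x - (1 / (real k + sqrt k)) * sum_list (map A J))\<^sup>2)
       = (1 / (real k + sqrt k))\<^sup>2 * real k * (\<Sum>i\<in>I. p i * (A i)\<^sup>2)"
proof -
  define \<mu> where "\<mu> = 1 / (real k + sqrt k)"
  have "0 < real k + sqrt k" using k1 by (intro add_pos_nonneg) auto
  then have mu0: "0 < \<mu>" unfolding \<mu>_def by simp
  have inv: "1 / \<mu> = real k + sqrt k" unfolding \<mu>_def by simp
  have "Ek I p k (\<lambda>J. (x - \<mu> * sum_list (map A J))\<^sup>2) = Ek I p k (\<lambda>J. \<mu>\<^sup>2 * (x / \<mu> - sum_list (map A J))\<^sup>2)"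
  proof -
    have "(x - \<mu> * s)\<^sup>2 = \<mu>\<^sup>2 * (x / \<mu> - s)\<^sup>2" for s
    proof -
      have "x - \<mu> * s = \<mu> * (x / \<mu> - s)" using mu0 by (simp add: field_simps)
      then show ?thesis by (simp add: power_mult_distrib)
    qed
    then show ?thesis by simp
  qed
  also have "\<dots> = \<mu>\<^sup>2 * Ek I p k (\<lambda>J. (x / \<mu> - sum_list (map A J))\<^sup>2)" by (rule Ek_cmult)
  also have "\<dots> = \<mu>\<^sup>2 * ((x / \<mu> - real k * x)\<^sup>2 + real k * (\<Sum>i\<in>I. p i * (A i - x)\<^sup>2))"
    using Ek_var[OF p1, of k "x / \<mu>" A] mean by simp
  also have "(x / \<mu> - real k * x)\<^sup>2 = real k * x\<^sup>2"
  proof -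
    have "x / \<mu> = x * (real k + sqrt k)" unfolding \<mu>_def by simp
    then have "x / \<mu> - real k * x = sqrt k * x" by (simp add: algebra_simps)
    then show ?thesis by (simp add: power_mult_distrib)
  qed
  also have "(\<Sum>i\<in>I. p i * (A i - x)\<^sup>2) = (\<Sum>i\<in>I. p i * (A i)\<^sup>2) - x\<^sup>2"
  proof -
    have "(\<Sum>i\<in>I. p i * (A i - x)\<^sup>2) = (\<Sum>i\<in>I. p i * (A i)\<^sup>2 - 2 * x * (p i * A i) + x\<^sup>2 * p i)"
      by (intro sum.cong refl) (simp add: power2_diff algebra_simps)
    also have "\<dots> = (\<Sum>i\<in>I. p i * (A i)\<^sup>2) - 2 * x * (\<Sum>i\<in>I. p i * A i) + x\<^sup>2 * sum p I"
      by (simp add: sum.distrib sum_subtractf sum_distrib_left)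
    finally show ?thesis using p1 mean by (simp add: power2_eq_square)
  qed
  finally show ?thesis unfolding \<mu>_def by (simp add: algebra_simps)
qed

lemma mu_sq_k: assumes "1 \<le> k" shows "(1 / (real k + sqrt k))\<^sup>2 * real k = 1 / (sqrt k + 1)\<^sup>2"
proof -
  have sk: "sqrt (real k) > 0" using assms by simp
  have "real k + sqrt k = sqrt k * (sqrt k + 1)" by (simp add: algebra_simps)
  then have "(1 / (real k + sqrt k))\<^sup>2 * real k = (sqrt k)\<^sup>2 / ((sqrt k)\<^sup>2 * (sqrt k + 1)\<^sup>2)"
    by (simp add: power_divide power_mult_distrib)
  also have "\<dots> = 1 / (sqrt k + 1)\<^sup>2" using sk by simp
  finally show ?thesis .
qed

lemma maurey_core:
  assumes k1: "1 \<le> k" and dI: "0 < dI" and dO: "0 < dO" and a0: "0 < \<alpha>"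
    and nb: "norm21 dI dO V * frob n dI Y \<le> \<alpha>"
  shows "\<exists>J. set J \<subseteq> Iset dI dO \<and> length J = k \<and>
            (frob n dO (msub (mmul dI Y V) (center n Y \<alpha> k J)))\<^sup>2 \<le> \<alpha>\<^sup>2 / (sqrt k + 1)\<^sup>2"
proof -
  define p where "p = pw n dI dO Y \<alpha> V"
  define I where "I = Iset dI dO"
  define \<mu> where "\<mu> = 1 / (real k + sqrt k)"
  define x where "x = mmul dI Y V"
  define F where "F = (\<lambda>J. (frob n dO (msub x (center n Y \<alpha> k J)))\<^sup>2)"
  have T1: "Tsum n dI dO Y \<alpha> V \<le> 1" by (rule Tsum_le[OF a0 nb])
  have pn: "\<forall>i\<in>I. 0 \<le> p i" unfolding p_def using pw_nonneg[OF a0 T1] by blast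
  have p1: "sum p I = 1" unfolding p_def I_def by (rule pw_sum[OF a0 dI dO])
  have finI: "finite I" unfolding I_def by (rule finite_Iset)
  have neI: "I \<noteq> {}" unfolding I_def Iset_def using dI dO by auto
  have F_eq: "F = (\<lambda>J. \<Sum>p0<n. \<Sum>q0<dO. (x p0 q0 - \<mu> * sum_list (map (\<lambda>i. atom n Y \<alpha> i p0 q0) J))\<^sup>2)"
    unfolding F_def frob_sq msub_def center_def \<mu>_def by simp
  have "Ek I p k F = (\<Sum>p0<n. \<Sum>q0<dO. Ek I p k (\<lambda>J. (x p0 q0 - \<mu> * sum_list (map (\<lambda>i. atom n Y \<alpha> i p0 q0) J))\<^sup>2))"
    unfolding F_eq Ek_sum by (simp add: Ek_sum)
  also have "\<dots> = (\<Sum>p0<n. \<Sum>q0<dO. \<mu>\<^sup>2 * real k * (\<Sum>i\<in>I. p i * (atom n Y \<alpha> i p0 q0)\<^sup>2))"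
  proof (intro sum.cong refl)
    fix p0 q0 assume "p0 \<in> {..<n}" "q0 \<in> {..<dO}"
    then have "(\<Sum>i\<in>I. p i * atom n Y \<alpha> i p0 q0) = x p0 q0"
      unfolding p_def I_def x_def using pw_mean[OF a0] by simp
    then show "Ek I p k (\<lambda>J. (x p0 q0 - \<mu> * sum_list (map (\<lambda>i. atom n Y \<alpha> i p0 q0) J))\<^sup>2)
        = \<mu>\<^sup>2 * real k * (\<Sum>i\<in>I. p i * (atom n Y \<alpha> i p0 q0)\<^sup>2)"
      unfolding \<mu>_def by (rule coord_E[OF p1 _ k1])
  qed
  also have "\<dots> = \<mu>\<^sup>2 * real k * (\<Sum>i\<in>I. p i * (\<Sum>p0<n. \<Sum>q0<dO. (atom n Y \<alpha> i p0 q0)\<^sup>2))"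
    by (simp add: sum_distrib_left sum.swap[of _ I] mult_ac)
  also have "\<dots> \<le> \<mu>\<^sup>2 * real k * (\<Sum>i\<in>I. p i * \<alpha>\<^sup>2)"
    using pn atom_norm unfolding I_def by (intro mult_left_mono sum_mono) auto
  also have "\<dots> = \<alpha>\<^sup>2 / (sqrt k + 1)\<^sup>2"
    using p1 mu_sq_k[OF k1] unfolding \<mu>_def by (simp add: sum_distrib_right[symmetric])
  finally have E: "Ek I p k F \<le> \<alpha>\<^sup>2 / (sqrt k + 1)\<^sup>2" .
  obtain J where J: "set J \<subseteq> I" "length J = k" "F J \<le> Ek I p k F"
    using Ek_exists[OF finI neI pn p1] by blast
  show ?thesis using J E unfolding F_def I_def x_def by auto
qed



lemma frob_dim0: "frob n 0 M = 0" unfolding frob_def by simp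

lemma maurey_stage:
  fixes Y :: mat and M :: nat
  assumes b0: "0 \<le> b" and R0: "0 \<le> R" and M1: "1 \<le> M" and MB: "2 * dI * dO \<le> M"
  shows "\<exists>C. finite C \<and> card C \<le> M ^ k \<and> (\<forall>c\<in>C. frob n dO c \<le> R) \<and>
     (\<forall>V. norm21 dI dO V \<le> b \<longrightarrow> frob n dO (mmul dI Y V) \<le> R \<longrightarrow>
        (\<exists>c\<in>C. frob n dO (msub (mmul dI Y V) c) \<le> frob n dI Y * b / (sqrt k + 1)))"
proof -
  define \<alpha> where "\<alpha> = frob n dI Y * b"
  have a0: "0 \<le> \<alpha>" unfolding \<alpha>_def using b0 frob_nonneg by simp
  have xb: "frob n dO (mmul dI Y V) \<le> \<alpha>" if "norm21 dI dO V \<le> b" for V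
  proof -
    have "frob n dO (mmul dI Y V) \<le> frob n dI Y * frob dI dO V" by (rule frob_mul_frob)
    also have "\<dots> \<le> frob n dI Y * b"
      using frob_le_norm21[of dI dO V] that frob_nonneg by (intro mult_left_mono) auto
    finally show ?thesis unfolding \<alpha>_def .
  qed
  have main: "\<exists>C. finite C \<and> card C \<le> M ^ k \<and> (\<forall>c\<in>C. frob n dO c \<le> R) \<and>
     (\<forall>V. norm21 dI dO V \<le> b \<longrightarrow> frob n dO (mmul dI Y V) \<le> R \<longrightarrow>
        (\<exists>c\<in>C. frob n dO (msub (mmul dI Y V) c) \<le> \<alpha> / (sqrt k + 1)))"
  proof (cases "k = 0 \<or> \<alpha> = 0 \<or> dO = 0")
    case True
    define C :: "mat set" where "C = {\<lambda>p q. 0}"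
    have "card C \<le> M ^ k" unfolding C_def using M1 by simp
    moreover have "\<forall>c\<in>C. frob n dO c \<le> R" unfolding C_def using R0 frob_zero by simp
    moreover have "\<exists>c\<in>C. frob n dO (msub (mmul dI Y V) c) \<le> \<alpha> / (sqrt k + 1)"
      if "norm21 dI dO V \<le> b" for V
    proof -
      have "frob n dO (msub (mmul dI Y V) (\<lambda>p q. 0)) \<le> \<alpha> / (sqrt k + 1)"
        using True
      proof (elim disjE)
        assume "k = 0" then show ?thesis using xb[OF that] frob_msub_zero by simp
      next
        assume "\<alpha> = 0" then show ?thesis using xb[OF that] frob_msub_zero by simp
      next
        assume "dO = 0" then show ?thesis using a0 frob_dim0 by simp
      qed
      then show ?thesis unfolding C_def by simp
    qed
    moreover have "finite C" unfolding C_def by simp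
    ultimately show ?thesis by (intro exI[of _ C] conjI allI impI) auto
  next
    case False
    then have k1: "1 \<le> k" and ap: "0 < \<alpha>" and dO: "0 < dO" using a0 by auto
    have dI: "0 < dI"
    proof (rule ccontr)
      assume "\<not> 0 < dI" then have "dI = 0" by simp
      then have "\<alpha> = 0" unfolding \<alpha>_def frob_def by simp
      then show False using ap by simp
    qed
    define LJ where "LJ = {J. set J \<subseteq> Iset dI dO \<and> length J = k}"
    define C where "C = proj n dO R ` center n Y \<alpha> k ` LJ"
    have finLJ: "finite LJ" unfolding LJ_def using finite_Iset by (rule finite_lists_length_eq)
    have "card C \<le> card LJ" unfolding C_def image_image by (rule card_image_le[OF finLJ])
    also have "\<dots> = (2 * dI * dO) ^ k" unfolding LJ_def
      using card_lists_length_eq[OF finite_Iset] card_Iset by simp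
    also have "\<dots> \<le> M ^ k" using MB by (rule power_mono) simp
    finally have cC: "card C \<le> M ^ k" .
    have nC: "\<forall>c\<in>C. frob n dO c \<le> R" unfolding C_def using proj_norm[OF R0] by auto
    have cov: "\<exists>c\<in>C. frob n dO (msub (mmul dI Y V) c) \<le> \<alpha> / (sqrt k + 1)"
      if V: "norm21 dI dO V \<le> b" "frob n dO (mmul dI Y V) \<le> R" for V
    proof -
      have nb: "norm21 dI dO V * frob n dI Y \<le> \<alpha>"
      proof -
        have "norm21 dI dO V * frob n dI Y \<le> b * frob n dI Y"
          by (rule mult_right_mono[OF V(1) frob_nonneg])
        then show ?thesis unfolding \<alpha>_def by (simp add: ac_simps)
      qed
      obtain J where J: "set J \<subseteq> Iset dI dO" "length J = k"
        "(frob n dO (msub (mmul dI Y V) (center n Y \<alpha> k J)))\<^sup>2 \<le> \<alpha>\<^sup>2 / (sqrt k + 1)\<^sup>2"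
        using maurey_core[OF k1 dI dO ap nb] by blast
      have "(frob n dO (msub (mmul dI Y V) (center n Y \<alpha> k J)))\<^sup>2 \<le> (\<alpha> / (sqrt k + 1))\<^sup>2"
        using J(3) by (simp add: power_divide)
      then have e: "frob n dO (msub (mmul dI Y V) (center n Y \<alpha> k J)) \<le> \<alpha> / (sqrt k + 1)"
        by (rule power2_le_imp_le) (use a0 in auto)
      have "J \<in> LJ" unfolding LJ_def using J by simp
      then have "proj n dO R (center n Y \<alpha> k J) \<in> C" unfolding C_def by (intro imageI)
      moreover have "frob n dO (msub (mmul dI Y V) (proj n dO R (center n Y \<alpha> k J))) \<le> \<alpha> / (sqrt k + 1)"
        using proj_close[OF V(2), of "center n Y \<alpha> k J"] e by linarith
      ultimately show ?thesis by blast
    qed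
    have fC: "finite C" unfolding C_def using finLJ by simp
    show ?thesis
    proof (rule exI[of _ C], intro conjI allI impI)
      show "finite C" by (rule fC)
      show "card C \<le> M ^ k" by (rule cC)
      show "\<forall>c\<in>C. frob n dO c \<le> R" by (rule nC)
      fix V assume "norm21 dI dO V \<le> b" "frob n dO (mmul dI Y V) \<le> R"
      then show "\<exists>c\<in>C. frob n dO (msub (mmul dI Y V) c) \<le> \<alpha> / (sqrt k + 1)" by (rule cov)
    qed
  qed
  then show ?thesis unfolding \<alpha>_def .
qed



lemma frob_msub_self: "frob n m (msub M M) = 0"
  unfolding msub_def frob_def by simp

lemma seq_cover:
  fixes M :: nat and k :: "nat \<Rightarrow> nat"
  assumes sig: "\<forall>x y. \<bar>\<sigma> x - \<sigma> y\<bar> \<le> \<bar>x - y\<bar>" "\<sigma> 0 = 0"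
    and M1: "1 \<le> M" and MB: "\<forall>i\<in>{1..r}. 2 * dd (i - 1) * dd i \<le> M"
    and H0: "frob n (dd 0) (mmul n At H) \<le> B0"
    and \<kappa>0: "\<forall>i\<in>{1..r}. 0 \<le> \<kappa> i" and b0: "\<forall>i\<in>{1..r}. 0 \<le> b i"
    and kk: "\<forall>i\<in>{1..r}. B0 * (\<Prod>t=1..i-1. \<kappa> t) * b i / (sqrt (k i) + 1) \<le> \<epsilon> i"
    and \<delta>0: "0 \<le> \<delta> 0" and \<delta>S: "\<forall>j<r. \<kappa> (Suc j) * \<delta> j + \<epsilon> (Suc j) \<le> \<delta> (Suc j)"
  shows "j \<le> r \<Longrightarrow> \<exists>C. finite C \<and> card C \<le> M ^ (\<Sum>i=1..j. k i) \<and>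
           (\<forall>c\<in>C. frob n (dd j) c \<le> B0 * (\<Prod>i=1..j. \<kappa> i)) \<and>
           (\<forall>V. (\<forall>i\<in>{1..j}. specn (dd (i-1)) (dd i) (V i) \<le> \<kappa> i \<and> norm21 (dd (i-1)) (dd i) (V i) \<le> b i)
              \<longrightarrow> (\<exists>c\<in>C. frob n (dd j) (msub (gin_stage \<sigma> At n dd V H j) c) \<le> \<delta> j))"
proof (induction j)
  case 0
  show ?case
    by (rule exI[of _ "{mmul n At H}"]) (use H0 \<delta>0 frob_msub_self in simp)
next
  case (Suc j)
  then have jr: "j < r" by simp
  obtain C where C: "finite C" "card C \<le> M ^ (\<Sum>i=1..j. k i)"
     "\<forall>c\<in>C. frob n (dd j) c \<le> B0 * (\<Prod>i=1..j. \<kappa> i)"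
     "\<forall>V. (\<forall>i\<in>{1..j}. specn (dd (i-1)) (dd i) (V i) \<le> \<kappa> i \<and> norm21 (dd (i-1)) (dd i) (V i) \<le> b i)
              \<longrightarrow> (\<exists>c\<in>C. frob n (dd j) (msub (gin_stage \<sigma> At n dd V H j) c) \<le> \<delta> j)"
    using Suc jr by auto
  define g where "g = (\<lambda>c :: mat. if j = 0 then c else (\<lambda>p q. \<sigma> (c p q)))"
  define \<beta> where "\<beta> = B0 * (\<Prod>i=1..j. \<kappa> i)"
  have sj: "Suc j \<in> {1..r}" using jr by simp
  have \<kappa>S: "0 \<le> \<kappa> (Suc j)" using \<kappa>0 sj by blast
  have bS: "0 \<le> b (Suc j)" using b0 sj by blast
  have B00: "0 \<le> B0" using H0 frob_nonneg order.trans by blast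
  have \<beta>0: "0 \<le> \<beta>" unfolding \<beta>_def using B00 \<kappa>0 jr by (intro mult_nonneg_nonneg prod_nonneg) auto
  have R0: "0 \<le> \<beta> * \<kappa> (Suc j)" using \<beta>0 \<kappa>S by simp
  have MBj: "2 * dd j * dd (Suc j) \<le> M" using MB sj by force
  have gnorm: "frob n (dd j) (g c) \<le> frob n (dd j) c" for c
    unfolding g_def using frob_sigma[OF sig] by simp
  have gdiff: "frob n (dd j) (msub (g c) (g c')) \<le> frob n (dd j) (msub c c')" for c c'
    unfolding g_def using frob_sigma_diff[OF sig(1)] by simp
  have "\<forall>c\<in>C. \<exists>Cc. finite Cc \<and> card Cc \<le> M ^ k (Suc j) \<and> (\<forall>c'\<in>Cc. frob n (dd (Suc j)) c' \<le> \<beta> * \<kappa> (Suc j)) \<and>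
     (\<forall>V. norm21 (dd j) (dd (Suc j)) V \<le> b (Suc j) \<longrightarrow> frob n (dd (Suc j)) (mmul (dd j) (g c) V) \<le> \<beta> * \<kappa> (Suc j) \<longrightarrow>
        (\<exists>c'\<in>Cc. frob n (dd (Suc j)) (msub (mmul (dd j) (g c) V) c') \<le> frob n (dd j) (g c) * b (Suc j) / (sqrt (k (Suc j)) + 1)))"
  proof
    fix c assume "c \<in> C"
    show "\<exists>Cc. finite Cc \<and> card Cc \<le> M ^ k (Suc j) \<and> (\<forall>c'\<in>Cc. frob n (dd (Suc j)) c' \<le> \<beta> * \<kappa> (Suc j)) \<and>
     (\<forall>V. norm21 (dd j) (dd (Suc j)) V \<le> b (Suc j) \<longrightarrow> frob n (dd (Suc j)) (mmul (dd j) (g c) V) \<le> \<beta> * \<kappa> (Suc j) \<longrightarrow>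
        (\<exists>c'\<in>Cc. frob n (dd (Suc j)) (msub (mmul (dd j) (g c) V) c') \<le> frob n (dd j) (g c) * b (Suc j) / (sqrt (k (Suc j)) + 1)))"
      by (rule maurey_stage[OF bS R0 M1 MBj])
  qed
  from bchoice[OF this] obtain F where F: "\<forall>c\<in>C. finite (F c) \<and> card (F c) \<le> M ^ k (Suc j) \<and> (\<forall>c'\<in>F c. frob n (dd (Suc j)) c' \<le> \<beta> * \<kappa> (Suc j)) \<and>
     (\<forall>V. norm21 (dd j) (dd (Suc j)) V \<le> b (Suc j) \<longrightarrow> frob n (dd (Suc j)) (mmul (dd j) (g c) V) \<le> \<beta> * \<kappa> (Suc j) \<longrightarrow>
        (\<exists>c'\<in>F c. frob n (dd (Suc j)) (msub (mmul (dd j) (g c) V) c') \<le> frob n (dd j) (g c) * b (Suc j) / (sqrt (k (Suc j)) + 1)))"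
    ..
  define C' where "C' = (\<Union>c\<in>C. F c)"
  have finC': "finite C'" unfolding C'_def using C(1) F by blast
  have "card C' \<le> (\<Sum>c\<in>C. card (F c))" unfolding C'_def by (rule card_UN_le[OF C(1)])
  also have "\<dots> \<le> (\<Sum>c\<in>C. M ^ k (Suc j))" using F by (intro sum_mono) blast
  also have "\<dots> = card C * M ^ k (Suc j)" by simp
  also have "\<dots> \<le> M ^ (\<Sum>i=1..j. k i) * M ^ k (Suc j)" using C(2) by (rule mult_right_mono) simp
  also have "\<dots> = M ^ (\<Sum>i=1..Suc j. k i)" by (simp add: power_add)
  finally have cardC': "card C' \<le> M ^ (\<Sum>i=1..Suc j. k i)" .
  have normC': "\<forall>c\<in>C'. frob n (dd (Suc j)) c \<le> B0 * (\<Prod>i=1..Suc j. \<kappa> i)"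
  proof
    fix c' assume "c' \<in> C'"
    then obtain c where "c \<in> C" "c' \<in> F c" unfolding C'_def by blast
    then have "frob n (dd (Suc j)) c' \<le> \<beta> * \<kappa> (Suc j)" using F by blast
    then show "frob n (dd (Suc j)) c' \<le> B0 * (\<Prod>i=1..Suc j. \<kappa> i)"
      unfolding \<beta>_def by (simp add: mult_ac)
  qed
  have covC': "\<exists>c'\<in>C'. frob n (dd (Suc j)) (msub (gin_stage \<sigma> At n dd V H (Suc j)) c') \<le> \<delta> (Suc j)"
    if V: "\<forall>i\<in>{1..Suc j}. specn (dd (i-1)) (dd i) (V i) \<le> \<kappa> i \<and> norm21 (dd (i-1)) (dd i) (V i) \<le> b i" for V
  proof -
    have Vj: "\<forall>i\<in>{1..j}. specn (dd (i-1)) (dd i) (V i) \<le> \<kappa> i \<and> norm21 (dd (i-1)) (dd i) (V i) \<le> b i"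
      using V by auto
    obtain c where c: "c \<in> C" "frob n (dd j) (msub (gin_stage \<sigma> At n dd V H j) c) \<le> \<delta> j"
      using C(4) Vj by blast
    have VS: "specn (dd j) (dd (Suc j)) (V (Suc j)) \<le> \<kappa> (Suc j)" "norm21 (dd j) (dd (Suc j)) (V (Suc j)) \<le> b (Suc j)"
      using bspec[OF V, of "Suc j"] by auto
    have gc: "frob n (dd j) (g c) \<le> \<beta>" using gnorm[of c] C(3) c(1) unfolding \<beta>_def by (meson order.trans)
    have "frob n (dd (Suc j)) (mmul (dd j) (g c) (V (Suc j))) \<le> specn (dd j) (dd (Suc j)) (V (Suc j)) * frob n (dd j) (g c)"
      by (rule frob_right_mul)
    also have "\<dots> \<le> \<kappa> (Suc j) * \<beta>" using VS(1) gc \<kappa>S frob_nonneg by (intro mult_mono) auto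
    finally have xR: "frob n (dd (Suc j)) (mmul (dd j) (g c) (V (Suc j))) \<le> \<beta> * \<kappa> (Suc j)" by (simp add: mult_ac)
    obtain c' where c': "c' \<in> F c" "frob n (dd (Suc j)) (msub (mmul (dd j) (g c) (V (Suc j))) c')
         \<le> frob n (dd j) (g c) * b (Suc j) / (sqrt (k (Suc j)) + 1)"
      using F c(1) VS(2) xR by blast
    have "frob n (dd j) (g c) * b (Suc j) / (sqrt (k (Suc j)) + 1) \<le> \<beta> * b (Suc j) / (sqrt (k (Suc j)) + 1)"
      using gc bS by (intro divide_right_mono mult_right_mono) auto
    also have "\<dots> \<le> \<epsilon> (Suc j)" using bspec[OF kk sj] unfolding \<beta>_def by simp
    finally have e1: "frob n (dd (Suc j)) (msub (mmul (dd j) (g c) (V (Suc j))) c') \<le> \<epsilon> (Suc j)"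
      using c'(2) by linarith
    have Zs: "gin_stage \<sigma> At n dd V H (Suc j) = mmul (dd j) (g (gin_stage \<sigma> At n dd V H j)) (V (Suc j))"
      unfolding g_def by simp
    have "frob n (dd (Suc j)) (msub (gin_stage \<sigma> At n dd V H (Suc j)) (mmul (dd j) (g c) (V (Suc j))))
       = frob n (dd (Suc j)) (mmul (dd j) (msub (g (gin_stage \<sigma> At n dd V H j)) (g c)) (V (Suc j)))"
      unfolding Zs mmul_msub ..
    also have "\<dots> \<le> specn (dd j) (dd (Suc j)) (V (Suc j)) * frob n (dd j) (msub (g (gin_stage \<sigma> At n dd V H j)) (g c))"
      by (rule frob_right_mul)
    also have "\<dots> \<le> \<kappa> (Suc j) * \<delta> j"
      using VS(1) gdiff[of "gin_stage \<sigma> At n dd V H j" c] c(2) \<kappa>S frob_nonneg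
      by (intro mult_mono) (auto intro: order.trans)
    finally have e0: "frob n (dd (Suc j)) (msub (gin_stage \<sigma> At n dd V H (Suc j)) (mmul (dd j) (g c) (V (Suc j)))) \<le> \<kappa> (Suc j) * \<delta> j" .
    have "frob n (dd (Suc j)) (msub (gin_stage \<sigma> At n dd V H (Suc j)) c')
       \<le> frob n (dd (Suc j)) (msub (gin_stage \<sigma> At n dd V H (Suc j)) (mmul (dd j) (g c) (V (Suc j))))
        + frob n (dd (Suc j)) (msub (mmul (dd j) (g c) (V (Suc j))) c')"
      by (rule frob_tri)
    also have "\<dots> \<le> \<kappa> (Suc j) * \<delta> j + \<epsilon> (Suc j)" using e0 e1 by linarith
    also have "\<dots> \<le> \<delta> (Suc j)" using \<delta>S jr by blast
    finally show ?thesis using c'(1) c(1) unfolding C'_def by blast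
  qed
  show ?case using finC' cardC' normC' covC' by blast
qed



definition kf :: "real \<Rightarrow> nat" where
  "kf t = (if t \<le> 1 then 0 else nat \<lceil>(sqrt t - 1)\<^sup>2\<rceil>)"

lemma kf_props: assumes "0 \<le> t" shows "sqrt t \<le> sqrt (real (kf t)) + 1" "real (kf t) \<le> t"
proof -
  have "sqrt t \<le> sqrt (real (kf t)) + 1 \<and> real (kf t) \<le> t"
  proof (cases "t \<le> 1")
    case True
    then show ?thesis using assms unfolding kf_def by simp
  next
    case False
    define y where "y = (sqrt t - 1)\<^sup>2"
    have st: "1 \<le> sqrt t" using False by simp
    have y0: "0 \<le> y" unfolding y_def by simp
    have k: "real (kf t) = of_int \<lceil>y\<rceil>" unfolding kf_def y_def using False y0 y_def by simp
    have "sqrt y = sqrt t - 1" unfolding y_def using st by simp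
    moreover have "sqrt y \<le> sqrt (real (kf t))" unfolding k by simp
    moreover have "of_int \<lceil>y\<rceil> \<le> t"
    proof -
      have "of_int \<lceil>y\<rceil> < y + 1" by linarith
      also have "y + 1 = t - 2 * sqrt t + 2" unfolding y_def using assms
        by (simp add: power2_diff)
      also have "\<dots> \<le> t" using st by simp
      finally show ?thesis by simp
    qed
    ultimately show ?thesis unfolding k by simp
  qed
  then show "sqrt t \<le> sqrt (real (kf t)) + 1" "real (kf t) \<le> t" by auto
qed

lemma powr_cube: assumes "0 \<le> (x::real)" shows "(x powr (2/3)) ^ 3 = x\<^sup>2"
proof -
  have "(x powr (2/3)) ^ 3 = (x powr (2/3)) powr (real 3)"
    by (subst powr_realpow') auto
  also have "\<dots> = x powr 2" by (simp add: powr_powr)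
  also have "\<dots> = x\<^sup>2"
  proof -
    have "x powr (real 2) = x ^ 2" by (rule powr_realpow'[OF assms]) simp
    then show ?thesis by simp
  qed
  finally show ?thesis .
qed

lemma tau_sq: assumes "0 \<le> (s::real)" shows "(s powr (3/2))\<^sup>2 = s ^ 3"
proof -
  have "(s powr (3/2))\<^sup>2 = (s powr (3/2)) powr (real 2)"
    by (subst powr_realpow') auto
  also have "\<dots> = s powr (real 3)" by (simp add: powr_powr)
  also have "\<dots> = s ^ 3" using assms by (subst powr_realpow') auto
  finally show ?thesis .
qed

lemma prod_split3:
  fixes f :: "nat \<Rightarrow> real"
  assumes "i \<in> {1..r}"
  shows "(\<Prod>t=1..i-1. f t) * f i * (\<Prod>t=i+1..r. f t) = (\<Prod>t=1..r. f t)"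
proof -
  have e: "{1..r} = insert i ({1..i-1} \<union> {i+1..r})" using assms by auto
  have "(\<Prod>t=1..r. f t) = f i * (\<Prod>t\<in>{1..i-1} \<union> {i+1..r}. f t)"
    unfolding e by (subst prod.insert) auto
  also have "(\<Prod>t\<in>{1..i-1} \<union> {i+1..r}. f t) = (\<Prod>t=1..i-1. f t) * (\<Prod>t=i+1..r. f t)"
    by (rule prod.union_disjoint) auto
  finally show ?thesis by (simp add: mult_ac)
qed

lemma Kp_step:
  fixes f :: "nat \<Rightarrow> real"
  assumes "j < r"
  shows "(\<Prod>t=j+1..r. f t) = f (Suc j) * (\<Prod>t=Suc j+1..r. f t)"
  using assms by (simp add: prod.atLeast_Suc_atMost)

theorem mainTheorem7:
  fixes N :: nat and n :: "nat \<Rightarrow> nat" and Ag Xg :: "nat \<Rightarrow> mat" and d0 :: nat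
    and \<sigma> :: "real \<Rightarrow> real" and L r l :: nat
    and d :: "nat \<Rightarrow> nat \<Rightarrow> nat" and \<kappa> b :: "nat \<Rightarrow> nat \<Rightarrow> real"
    and W :: "nat \<Rightarrow> nat \<Rightarrow> mat" and \<epsilon> :: real
  defines "A \<equiv> blockdiag N n Ag"
      and "X \<equiv> vstack N n Xg"
      and "ntot \<equiv> (\<Sum>i<N. n i)"
  assumes graphs01: "\<forall>i<N. \<forall>p<n i. \<forall>q<n i. Ag i p q \<in> {0, 1}"
      and graphs_sym: "\<forall>i<N. \<forall>p<n i. \<forall>q<n i. Ag i p q = Ag i q p"
      and sigma_lip: "\<forall>x y. \<bar>\<sigma> x - \<sigma> y\<bar> \<le> \<bar>x - y\<bar>"
      and sigma0: "\<sigma> 0 = 0"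
      and r_pos: "r \<ge> 1"
      and dim_first: "d 1 0 = d0"
      and dim_chain: "\<forall>k\<in>{2..L}. d k 0 = d (k - 1) r"
      and kappa_pos: "\<forall>k\<in>{1..L}. \<forall>i\<in>{1..r}. \<kappa> k i > 0"
      and b_nonneg: "\<forall>k\<in>{1..L}. \<forall>i\<in>{1..r}. b k i \<ge> 0"
      and l_range: "l \<in> {1..L}"
      and W_ok: "\<forall>k\<in>{1..<l}. weights_ok r (d k) (\<kappa> k) (b k) (W k)"
      and eps_pos: "\<epsilon> > 0"
  shows "let At = addI A;
             Hprev = gin_net \<sigma> At ntot r d W X (l - 1);
             S = {gin_layer \<sigma> At ntot r (d l) V Hprev | V. weights_ok r (d l) (\<kappa> l) (b l) V};
             kap = (\<lambda>k. \<Prod>j=1..r. \<kappa> k j);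
             \<tau> = (\<Sum>i=1..r. (b l i / \<kappa> l i) powr (2/3)) powr (3/2);
             c = specn ntot ntot At;
             dbar = Max {d k i | k i. k \<in> {1..L} \<and> i \<in> {0..r}};
             Ncov = covering_number \<epsilon> S ntot (d l r)
         in Ncov \<noteq> \<infinity> \<and>
            ln (real (the_enat Ncov)) \<le>
              c ^ (2 * l) * \<tau>\<^sup>2 * (\<Prod>k=1..l. kap k)\<^sup>2 / \<epsilon>\<^sup>2
                * (frob ntot d0 X)\<^sup>2 * ln (2 * (real dbar)\<^sup>2)"
proof -
  define At where "At = addI A"
  define Hprev where "Hprev = gin_net \<sigma> At ntot r d W X (l - 1)"
  define SS where "SS = {gin_layer \<sigma> At ntot r (d l) V Hprev | V. weights_ok r (d l) (\<kappa> l) (b l) V}"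
  define kap where "kap = (\<lambda>k. \<Prod>j=1..r. \<kappa> k j)"
  define xi where "xi = (\<lambda>i. b l i / \<kappa> l i)"
  define a where "a = (\<lambda>i. xi i powr (2/3))"
  define Sa where "Sa = (\<Sum>i=1..r. a i)"
  define \<tau> where "\<tau> = (\<Sum>i=1..r. (b l i / \<kappa> l i) powr (2/3)) powr (3/2)"
  define c where "c = specn ntot ntot At"
  define dbar where "dbar = Max {d k i | k i. k \<in> {1..L} \<and> i \<in> {0..r}}"
  define Ncov where "Ncov = covering_number \<epsilon> SS ntot (d l r)"
  define RR where "RR = c ^ (2 * l) * \<tau>\<^sup>2 * (\<Prod>k=1..l. kap k)\<^sup>2 / \<epsilon>\<^sup>2 * (frob ntot d0 X)\<^sup>2 * ln (2 * (real dbar)\<^sup>2)"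
  have l1: "1 \<le> l" and lL: "l \<le> L" using l_range by auto
  have c0: "0 \<le> c" unfolding c_def by (rule specn_nonneg)
  have \<kappa>pos: "\<forall>i\<in>{1..r}. 0 < \<kappa> l i" using kappa_pos l_range by blast
  have bnn: "\<forall>i\<in>{1..r}. 0 \<le> b l i" using b_nonneg l_range by blast
  define PX where "PX = (\<Prod>i=1..l-1. kap i) * frob ntot d0 X"
  have net: "frob ntot (d l 0) Hprev \<le> c ^ (l - 1) * PX"
  proof -
    have "frob ntot (d (Suc (l - 1)) 0) (gin_net \<sigma> At ntot r d W X (l - 1))
          \<le> specn ntot ntot At ^ (l - 1) * (\<Prod>i=1..l-1. (\<Prod>j=1..r. \<kappa> i j)) * frob ntot d0 X"
      by (rule net_bound[OF sigma_lip sigma0 dim_first dim_chain lL W_ok]) (use l1 in simp)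
    then show ?thesis using l1 unfolding Hprev_def c_def PX_def kap_def by (simp add: mult_ac)
  qed
  define B0 where "B0 = c ^ l * PX"
  have H0: "frob ntot (d l 0) (mmul ntot At Hprev) \<le> B0"
  proof -
    have "frob ntot (d l 0) (mmul ntot At Hprev) \<le> c * frob ntot (d l 0) Hprev"
      unfolding c_def by (rule frob_left_mul)
    also have "\<dots> \<le> c * (c ^ (l - 1) * PX)" using net c0 by (rule mult_left_mono)
    also have "\<dots> = B0" unfolding B0_def using l1
      by (metis (no_types, lifting) mult.assoc power_eq_if not_one_le_zero)
    finally show ?thesis .
  qed
  have B00: "0 \<le> B0" using H0 frob_nonneg order.trans by blast
  define M :: nat where "M = max 1 (2 * dbar\<^sup>2)"
  have M1: "1 \<le> M" unfolding M_def by simp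
  have finD: "finite {d k i | k i. k \<in> {1..L} \<and> i \<in> {0..r}}"
  proof -
    have "{d k i | k i. k \<in> {1..L} \<and> i \<in> {0..r}} = (\<lambda>(k,i). d k i) ` ({1..L} \<times> {0..r})" by fastforce
    then show ?thesis by simp
  qed
  have dle: "d l i \<le> dbar" if "i \<le> r" for i
    unfolding dbar_def using that l_range by (intro Max_ge[OF finD]) auto
  have MB: "\<forall>i\<in>{1..r}. 2 * d l (i - 1) * d l i \<le> M"
  proof
    fix i assume i: "i \<in> {1..r}"
    have "2 * d l (i - 1) * d l i \<le> 2 * dbar * dbar"
      using dle[of "i-1"] dle[of i] i by (intro mult_mono) auto
    then show "2 * d l (i - 1) * d l i \<le> M" unfolding M_def by (simp add: power2_eq_square)
  qed
  have xi0: "\<forall>i\<in>{1..r}. 0 \<le> xi i" unfolding xi_def using \<kappa>pos bnn by auto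
  have a0: "\<forall>i\<in>{1..r}. 0 \<le> a i" unfolding a_def by simp
  have Sa0: "0 \<le> Sa" unfolding Sa_def using a0 by (intro sum_nonneg) auto
  have Sa_zero: "a i = 0" if "Sa = 0" "i \<in> {1..r}" for i
    using sum_nonneg_eq_0_iff[of "{1..r}" a] a0 that unfolding Sa_def by auto
  have a_zero: "b l i = 0" if "i \<in> {1..r}" "a i = 0" for i
  proof -
    have "xi i = 0" using that unfolding a_def by simp
    moreover have "0 < \<kappa> l i" using \<kappa>pos that(1) by blast
    ultimately show ?thesis unfolding xi_def by simp
  qed
  have xa: "(xi i)\<^sup>2 = (a i) ^ 3" if "i \<in> {1..r}" for i
    unfolding a_def using powr_cube xi0 that by auto
  define Kp where "Kp = (\<lambda>j. \<Prod>t=j+1..r. \<kappa> l t)"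
  define P where "P = (\<lambda>j. \<Prod>t=1..j. \<kappa> l t)"
  define Kall where "Kall = (\<Prod>t=1..r. \<kappa> l t)"
  have Kp_pos: "0 < Kp j" for j unfolding Kp_def by (intro prod_pos) (use \<kappa>pos in force)
  have Kp_r: "Kp r = 1" unfolding Kp_def by simp
  have P0: "0 \<le> P j" if "j \<le> r" for j unfolding P_def by (intro prod_nonneg) (use \<kappa>pos that in force)
  define eps where "eps = (\<lambda>i. if Sa = 0 then 0 else \<epsilon> * a i / (Sa * Kp i))"
  define \<delta> where "\<delta> = (\<lambda>j. if Sa = 0 then 0 else \<epsilon> * (\<Sum>i=1..j. a i) / (Sa * Kp j))"
  define q where "q = (\<lambda>i. B0 * P (i - 1) * b l i)"
  define t where "t = (\<lambda>i. (q i / eps i)\<^sup>2)"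
  define k where "k = (\<lambda>i. kf (t i))"
  have eps0: "\<forall>i\<in>{1..r}. 0 \<le> eps i"
    unfolding eps_def using eps_pos a0 Sa0 Kp_pos by (auto intro!: divide_nonneg_pos mult_pos_pos)
  have q0: "0 \<le> q i" if "i \<in> {1..r}" for i
    unfolding q_def using B00 P0[of "i-1"] bnn that by auto
  have kk: "\<forall>i\<in>{1..r}. B0 * (\<Prod>t=1..i-1. \<kappa> l t) * b l i / (sqrt (k i) + 1) \<le> eps i"
  proof
    fix i assume i: "i \<in> {1..r}"
    have qi: "B0 * (\<Prod>t=1..i-1. \<kappa> l t) * b l i = q i" unfolding q_def P_def ..
    show "B0 * (\<Prod>t=1..i-1. \<kappa> l t) * b l i / (sqrt (k i) + 1) \<le> eps i"
    proof (cases "eps i = 0")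
      case True
      then have "Sa = 0 \<or> a i = 0"
        unfolding eps_def using eps_pos Kp_pos[of i] by (auto split: if_splits)
      then have "a i = 0" using Sa_zero i by blast
      then have "b l i = 0" using a_zero i by blast
      then show ?thesis unfolding qi q_def using True by simp
    next
      case False
      then have ep: "0 < eps i" using eps0 i by force
      have "sqrt (t i) = q i / eps i" unfolding t_def using q0[OF i] ep by simp
      then have "q i / eps i \<le> sqrt (k i) + 1" using kf_props(1)[of "t i"] unfolding k_def t_def by simp
      then have "q i \<le> (sqrt (k i) + 1) * eps i" using ep by (simp add: divide_le_eq mult_ac)
      moreover have "0 < sqrt (real (k i)) + 1" using real_sqrt_ge_zero[of "real (k i)"] by linarith
      ultimately show ?thesis unfolding qi by (simp add: pos_divide_le_eq mult_ac)
    qed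
  qed
  have \<delta>0: "0 \<le> \<delta> 0" unfolding \<delta>_def by simp
  have \<delta>S: "\<forall>j<r. \<kappa> l (Suc j) * \<delta> j + eps (Suc j) \<le> \<delta> (Suc j)"
  proof (intro allI impI)
    fix j assume j: "j < r"
    show "\<kappa> l (Suc j) * \<delta> j + eps (Suc j) \<le> \<delta> (Suc j)"
    proof (cases "Sa = 0")
      case False
      have Kj: "Kp j = \<kappa> l (Suc j) * Kp (Suc j)" unfolding Kp_def using Kp_step[OF j] by simp
      have k0: "0 < \<kappa> l (Suc j)" using \<kappa>pos j by auto
      have "\<kappa> l (Suc j) * \<delta> j + eps (Suc j)
          = \<epsilon> * (\<Sum>i=1..j. a i) / (Sa * Kp (Suc j)) + \<epsilon> * a (Suc j) / (Sa * Kp (Suc j))"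
        unfolding \<delta>_def eps_def Kj using False k0 by simp
      also have "\<dots> = \<delta> (Suc j)"
        unfolding \<delta>_def using False by (simp add: add_divide_distrib[symmetric] distrib_left)
      finally show ?thesis by simp
    qed (simp add: \<delta>_def eps_def)
  qed
  have \<delta>r: "\<delta> r \<le> \<epsilon>"
    unfolding \<delta>_def using Kp_r eps_pos Sa_def by auto
  obtain C where C: "finite C" "card C \<le> M ^ (\<Sum>i=1..r. k i)"
    "\<forall>V. (\<forall>i\<in>{1..r}. specn (d l (i-1)) (d l i) (V i) \<le> \<kappa> l i \<and> norm21 (d l (i-1)) (d l i) (V i) \<le> b l i)
        \<longrightarrow> (\<exists>c\<in>C. frob ntot (d l r) (msub (gin_stage \<sigma> At ntot (d l) V Hprev r) c) \<le> \<delta> r)"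
  proof -
    have \<kappa>0: "\<forall>i\<in>{1..r}. 0 \<le> \<kappa> l i" using \<kappa>pos by (simp add: less_imp_le)
    show ?thesis using seq_cover[OF sigma_lip sigma0 M1 MB H0 \<kappa>0 bnn kk \<delta>0 \<delta>S, of r] that by blast
  qed
  have Ccov: "C \<in> {V. finite V \<and> (\<forall>M\<in>SS. \<exists>U\<in>V. frob ntot (d l r) (msub M U) \<le> \<epsilon>)}"
  proof -
    have "\<exists>U\<in>C. frob ntot (d l r) (msub Z U) \<le> \<epsilon>" if Z: "Z \<in> SS" for Z
    proof -
      obtain V where V: "Z = gin_layer \<sigma> At ntot r (d l) V Hprev" "weights_ok r (d l) (\<kappa> l) (b l) V"
        using Z unfolding SS_def by blast
      then obtain U where "U \<in> C" "frob ntot (d l r) (msub Z U) \<le> \<delta> r"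
        using C(3) unfolding weights_ok_def gin_layer_def by blast
      then show ?thesis using \<delta>r by force
    qed
    then show ?thesis using C(1) by blast
  qed
  have Nle: "Ncov \<le> enat (card C)"
    unfolding Ncov_def covering_number_def by (rule INF_lower[OF Ccov])
  then have Nfin: "Ncov \<noteq> \<infinity>" by (cases Ncov) auto
  have Nle': "the_enat Ncov \<le> card C" using Nle Nfin by (cases Ncov) auto
  define s where "s = (B0 * Kall * Sa / \<epsilon>)\<^sup>2"
  have tsum: "t i = s * a i" if i: "i \<in> {1..r}" for i
  proof (cases "Sa = 0 \<or> a i = 0")
    case True
    then have ai: "a i = 0" using Sa_zero i by blast
    then have "b l i = 0" using a_zero i by blast
    then show ?thesis unfolding t_def q_def using ai by simp
  next
    case False
    have "0 \<le> a i" using a0 i by blast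
    then have Sp: "0 < Sa" and ap: "0 < a i" using Sa0 False by auto
    have split: "P (i - 1) * \<kappa> l i * Kp i = Kall"
      unfolding P_def Kp_def Kall_def by (rule prod_split3[OF i])
    have kpi: "0 < \<kappa> l i" using \<kappa>pos i by blast
    have bl: "b l i = xi i * \<kappa> l i" unfolding xi_def using kpi by simp
    have e: "eps i = \<epsilon> * a i / (Sa * Kp i)" using Sp by (simp add: eps_def)
    have "q i / eps i = B0 * P (i - 1) * b l i * (Sa * Kp i) / (\<epsilon> * a i)"
      unfolding e q_def by (simp only: divide_divide_eq_right)
    also have "\<dots> = B0 * (P (i - 1) * \<kappa> l i * Kp i) * xi i * Sa / (\<epsilon> * a i)"
      unfolding bl by (simp add: mult_ac)
    also have "\<dots> = B0 * Kall * Sa / \<epsilon> * (xi i / a i)" unfolding split by (simp add: field_simps)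
    finally have "t i = s * ((xi i)\<^sup>2 / (a i)\<^sup>2)" unfolding t_def s_def by (simp add: power_mult_distrib power_divide)
    also have "(xi i)\<^sup>2 / (a i)\<^sup>2 = a i" using xa[OF i] ap by (simp add: power2_eq_square power3_eq_cube)
    finally show ?thesis .
  qed
  have ksum: "real (\<Sum>i=1..r. k i) \<le> s * Sa"
  proof -
    have "real (\<Sum>i=1..r. k i) = (\<Sum>i=1..r. real (k i))" by simp
    also have "\<dots> \<le> (\<Sum>i=1..r. t i)"
      unfolding k_def t_def by (intro sum_mono kf_props(2)) simp
    also have "\<dots> = (\<Sum>i=1..r. s * a i)" using tsum by (intro sum.cong) auto
    also have "\<dots> = s * Sa" unfolding Sa_def by (simp add: sum_distrib_left)
    finally show ?thesis .
  qed
  have lnM: "ln (real M) = ln (2 * (real dbar)\<^sup>2)"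
  proof (cases "dbar = 0")
    case True then show ?thesis unfolding M_def by simp
  next
    case False then have "1 \<le> 2 * dbar\<^sup>2" by simp
    then show ?thesis unfolding M_def by (simp add: max_def)
  qed
  have lnM0: "0 \<le> ln (real M)" using M1 by simp
  have RR_eq: "RR = s * Sa * ln (real M)"
  proof -
    have Kk: "Kall = kap l" unfolding Kall_def kap_def ..
    have pk: "(\<Prod>k=1..l. kap k) = (\<Prod>k=1..l-1. kap k) * kap l"
    proof -
      obtain l' where l': "l = Suc l'" using l1 by (cases l) auto
      show ?thesis unfolding l' by (simp add: prod.nat_ivl_Suc' mult_ac)
    qed
    have tau2: "\<tau>\<^sup>2 = Sa ^ 3" unfolding \<tau>_def Sa_def a_def xi_def using tau_sq Sa0 unfolding Sa_def a_def xi_def by simp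
    have "s * Sa = (B0 * Kall)\<^sup>2 * Sa ^ 3 / \<epsilon>\<^sup>2" unfolding s_def
      by (simp add: power_mult_distrib power_divide power3_eq_cube power2_eq_square)
    also have "(B0 * Kall)\<^sup>2 = c ^ (2 * l) * (\<Prod>k=1..l. kap k)\<^sup>2 * (frob ntot d0 X)\<^sup>2"
      unfolding B0_def PX_def Kk pk by (simp add: power_mult_distrib power_mult mult_ac)
    finally show ?thesis unfolding RR_def tau2 lnM by (simp add: mult_ac)
  qed
  have RR0: "0 \<le> RR" unfolding RR_eq using Sa0 lnM0 s_def by simp
  have lnN: "ln (real (the_enat Ncov)) \<le> RR"
  proof (cases "the_enat Ncov = 0")
    case True then show ?thesis using RR0 by simp
  next
    case False
    then have "0 < real (the_enat Ncov)" by simp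
    then have "ln (real (the_enat Ncov)) \<le> ln (real (card C))" using Nle' by simp
    also have "\<dots> \<le> ln (real (M ^ (\<Sum>i=1..r. k i)))"
    proof -
      have cpos: "0 < real (card C)" using False Nle' by simp
      have le: "real (card C) \<le> real (M ^ (\<Sum>i=1..r. k i))" using C(2) by (simp only: of_nat_le_iff)
      have Mpos: "0 < real (M ^ (\<Sum>i=1..r. k i))" using M1 by simp
      show ?thesis using iffD2[OF ln_le_cancel_iff[OF cpos Mpos] le] .
    qed
    also have "\<dots> = real (\<Sum>i=1..r. k i) * ln (real M)" using M1 by (simp add: ln_realpow)
    also have "\<dots> \<le> s * Sa * ln (real M)" using ksum lnM0 by (rule mult_right_mono)
    finally show ?thesis unfolding RR_eq .
  qed
  show ?thesis
    unfolding Let_def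
    using Nfin lnN unfolding Ncov_def SS_def At_def Hprev_def RR_def kap_def \<tau>_def c_def dbar_def
    by simp
qed


end
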